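(* Let $\Bbbk$ be a field with $\mathrm{char}(\Bbbk)\ne2$, $n\ge2$, $\mathbb{H}_{2^n}$ the Nichols Hopf algebra and $A$ a unital associative $\Bbbk$-algebra. Let $\rho:A\to A\otimes\mathbb{H}_{2^n}$ be a linear map, written $\rho(a)=a^0\otimes a^1$, such that $A_1:=(1^*-g^* )(1^1)1^0=0$ and $w_i:=(x_i^*-(gx_i)^* )(1^1)1^0\in Z(A)$ for all $i\in\{1,\dots,n-1\}$. Then $\rho$ is a partial coaction of $\mathbb{H}_{2^n}$ on $A$ if and only if $$\rho(a)=a\otimes\frac{1+g}{2}-\sum_{i=1}^{n-1}w_ia\otimes gx_i\quad\text{for all }a\in A.$$ Moreover, all these partial coactions are symmetric.
   Context: $\mathbb{H}_{2^n}$ is the Hopf algebra generated by $g,x_1,\dots,x_{n-1}$ with relations $g^2=1$, $x_i^2=0$, $x_ig=-gx_i$, $x_ix_j=-x_jx_i$, basis $\{g^{j_0}x_1^{j_1}\cdots x_{n-1}^{j_{n-1}}:j_i\in\{0,1\}\}$, $g$ group-like, $\Delta(x_i)=x_i\otimes1+g\otimes x_i$, $\varepsilon(x_i)=0$. For a basis element $b$, $b^*$ denotes the corresponding element of the dual basis. $Z(A)$ is the center of $A$. For a bialgebra $H$, a partial coaction of $H$ on $A$ is a linear map $\rho:A\to A\otimes H$ such that $(I\otimes\varepsilon)\rho(a)=a$, $\rho(ab)=\rho(a)\rho(b)$ and $(\rho\otimes I)\rho(a)=(\rho(1_A)\otimes1_H)((I\otimes\Delta)\rho(a))$ for all $a,b\in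 A$; it is symmetric if moreover $(\rho\otimes I)\rho(a)=((I\otimes\Delta)\rho(a))(\rho(1_A)\otimes1_H)$ for all $a$. *)

theory Defs
  imports Main
begin

text \<open>Basis of the Nichols Hopf algebra H_{2^n}: the index (a, S) with a :: bool and
  S a subset of {1..<n} stands for g^a x_{s1} x_{s2} ... x_{sk}, where s1 < ... < sk
  enumerate S.  Elements of H are functions Idx n -> k (coordinates in this basis),
  elements of A (tensor) H are functions Idx n -> A (the element sum_b t(b) (tensor) b),
  elements of A (tensor) H (tensor) H are functions Idx n x Idx n -> A.\<close>

type_synonym hidx = "bool \<times> nat set"

definition Idx :: "nat \<Rightarrow> hidx set" where
  "Idx n = UNIV \<times> Pow {1..<n}"

text \<open>Structure constants of the multiplication: coefficient of the basis element e
  in the product of basis elements (a,S) and (b,T), using g^2=1, x_i g = - g x_i,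
  x_i x_j = - x_j x_i, x_i^2 = 0.\<close>
definition bmul :: "hidx \<Rightarrow> hidx \<Rightarrow> hidx \<Rightarrow> 'k::field" where
  "bmul bs dt e = (case bs of (a, S) \<Rightarrow> case dt of (b, T) \<Rightarrow>
     (if S \<inter> T = {} \<and> e = (a \<noteq> b, S \<union> T)
      then (- 1) ^ (if b then card S else 0)
           * (- 1) ^ card {(s, t). s \<in> S \<and> t \<in> T \<and> t < s}
      else 0))"

definition hhmul :: "nat \<Rightarrow> (hidx \<times> hidx \<Rightarrow> 'k::field) \<Rightarrow> (hidx \<times> hidx \<Rightarrow> 'k)
    \<Rightarrow> hidx \<times> hidx \<Rightarrow> 'k" where
  "hhmul n u v = (\<lambda>(e1, e2). \<Sum>b1\<in>Idx n. \<Sum>b2\<in>Idx n. \<Sum>d1\<in>Idx n. \<Sum>d2\<in>Idx n.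
      bmul b1 d1 e1 * bmul b2 d2 e2 * u (b1, b2) * v (d1, d2))"

definition delta_g :: "bool \<Rightarrow> hidx \<times> hidx \<Rightarrow> 'k::field" where
  "delta_g a = (\<lambda>p. if p = ((a, {}), (a, {})) then 1 else 0)"

definition delta_x :: "nat \<Rightarrow> hidx \<times> hidx \<Rightarrow> 'k::field" where
  "delta_x i = (\<lambda>p. (if p = ((False, {i}), (False, {})) then 1 else 0)
                  + (if p = ((True, {}), (False, {i})) then 1 else 0))"

text \<open>Comultiplication of a basis element, extended multiplicatively from the generators:
  coefficient of c (tensor) d in Delta(b).\<close>
definition Dl :: "nat \<Rightarrow> hidx \<Rightarrow> hidx \<Rightarrow> hidx \<Rightarrow> 'k::field" where
  "Dl n b c d = foldl (\<lambda>acc i. hhmul n acc (delta_x i)) (delta_g (fst b))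
                   (sorted_list_of_set (snd b)) (c, d)"

definition heps :: "hidx \<Rightarrow> 'k::field" where
  "heps b = (if snd b = {} then 1 else 0)"

text \<open>A unital associative k-algebra: a ring A with a unital ring homomorphism
  iota : k -> Z(A); scalar multiplication is c . a = iota c * a.\<close>
definition kalg :: "('k::field \<Rightarrow> 'a::ring_1) \<Rightarrow> bool" where
  "kalg \<iota> \<longleftrightarrow> \<iota> 1 = 1 \<and> (\<forall>x y. \<iota> (x + y) = \<iota> x + \<iota> y) \<and> (\<forall>x y. \<iota> (x * y) = \<iota> x * \<iota> y)
      \<and> (\<forall>x a. \<iota> x * a = a * \<iota> x)"

definition klinear :: "('k::field \<Rightarrow> 'a::ring_1) \<Rightarrow> ('a \<Rightarrow> hidx \<Rightarrow> 'a) \<Rightarrow> bool" where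
  "klinear \<iota> \<rho> \<longleftrightarrow> (\<forall>a b. \<rho> (a + b) = (\<lambda>e. \<rho> a e + \<rho> b e))
      \<and> (\<forall>c a. \<rho> (\<iota> c * a) = (\<lambda>e. \<iota> c * \<rho> a e))"

definition tens :: "'a::zero \<Rightarrow> hidx \<Rightarrow> hidx \<Rightarrow> 'a" where
  "tens a b = (\<lambda>c. if c = b then a else 0)"

definition tmul :: "nat \<Rightarrow> ('k::field \<Rightarrow> 'a::ring_1) \<Rightarrow> (hidx \<Rightarrow> 'a) \<Rightarrow> (hidx \<Rightarrow> 'a)
    \<Rightarrow> hidx \<Rightarrow> 'a" where
  "tmul n \<iota> t u = (\<lambda>e. \<Sum>b\<in>Idx n. \<Sum>d\<in>Idx n. \<iota> (bmul b d e) * t b * u d)"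

definition ttmul :: "nat \<Rightarrow> ('k::field \<Rightarrow> 'a::ring_1) \<Rightarrow> (hidx \<times> hidx \<Rightarrow> 'a)
    \<Rightarrow> (hidx \<times> hidx \<Rightarrow> 'a) \<Rightarrow> hidx \<times> hidx \<Rightarrow> 'a" where
  "ttmul n \<iota> t u = (\<lambda>(e1, e2). \<Sum>b1\<in>Idx n. \<Sum>b2\<in>Idx n. \<Sum>d1\<in>Idx n. \<Sum>d2\<in>Idx n.
      \<iota> (bmul b1 d1 e1 * bmul b2 d2 e2) * t (b1, b2) * u (d1, d2))"

definition rho_rho :: "nat \<Rightarrow> ('a \<Rightarrow> hidx \<Rightarrow> 'a) \<Rightarrow> 'a \<Rightarrow> hidx \<times> hidx \<Rightarrow> 'a::ring_1" where
  "rho_rho n \<rho> a = (\<lambda>(c, b). if b \<in> Idx n then \<rho> (\<rho> a b) c else 0)"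

definition id_delta :: "nat \<Rightarrow> ('k::field \<Rightarrow> 'a::ring_1) \<Rightarrow> (hidx \<Rightarrow> 'a) \<Rightarrow> hidx \<times> hidx \<Rightarrow> 'a" where
  "id_delta n \<iota> t = (\<lambda>(c, d). \<Sum>b\<in>Idx n. \<iota> (Dl n b c d) * t b)"

definition tens_one :: "(hidx \<Rightarrow> 'a::zero) \<Rightarrow> hidx \<times> hidx \<Rightarrow> 'a" where
  "tens_one t = (\<lambda>(c, b). if b = (False, {}) then t c else 0)"

definition partial_coaction :: "nat \<Rightarrow> ('k::field \<Rightarrow> 'a::ring_1) \<Rightarrow> ('a \<Rightarrow> hidx \<Rightarrow> 'a) \<Rightarrow> bool" where
  "partial_coaction n \<iota> \<rho> \<longleftrightarrow>
     (\<forall>a. (\<Sum>b\<in>Idx n. \<iota> (heps b) * \<rho> a b) = a)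
   \<and> (\<forall>a b. \<rho> (a * b) = tmul n \<iota> (\<rho> a) (\<rho> b))
   \<and> (\<forall>a. rho_rho n \<rho> a = ttmul n \<iota> (tens_one (\<rho> 1)) (id_delta n \<iota> (\<rho> a)))"

definition symmetric_partial_coaction :: "nat \<Rightarrow> ('k::field \<Rightarrow> 'a::ring_1) \<Rightarrow> ('a \<Rightarrow> hidx \<Rightarrow> 'a) \<Rightarrow> bool" where
  "symmetric_partial_coaction n \<iota> \<rho> \<longleftrightarrow> partial_coaction n \<iota> \<rho>
   \<and> (\<forall>a. rho_rho n \<rho> a = ttmul n \<iota> (id_delta n \<iota> (\<rho> a)) (tens_one (\<rho> 1)))"

definition wcoef :: "('a \<Rightarrow> hidx \<Rightarrow> 'a::ring_1) \<Rightarrow> nat \<Rightarrow> 'a" where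
  "wcoef \<rho> i = \<rho> 1 (False, {i}) - \<rho> 1 (True, {i})"

end

theory Submission
  imports Defs
begin

lemma finite_Idx[simp]: "finite (Idx n)"
  unfolding Idx_def by simp

lemma sum_single:
  assumes "finite I" "\<And>d. d \<in> I \<Longrightarrow> d \<noteq> d0 \<Longrightarrow> f d = 0"
  shows "sum f I = (if d0 \<in> I then f d0 else 0)"
proof -
  have "sum f I = sum (\<lambda>d. if d = d0 then f d else 0) I"
    by (rule sum.cong) (use assms in auto)
  also have "\<dots> = (if d0 \<in> I then f d0 else 0)"
    using assms(1) by (simp add: sum.delta)
  finally show ?thesis .
qed

lemma sum_two:
  assumes "finite I" "x \<in> I" "y \<in> I" "x \<noteq> y"
    "\<And>b. b \<in> I \<Longrightarrow> b \<noteq> x \<Longrightarrow> b \<noteq> y \<Longrightarrow> f b = 0"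
  shows "sum f I = f x + f y"
proof -
  have "sum f I = sum f {x, y}"
    by (rule sum.mono_neutral_right) (use assms in auto)
  then show ?thesis using assms(4) by simp
qed

lemma kalg_one: "kalg \<iota> \<Longrightarrow> \<iota> 1 = 1" unfolding kalg_def by blast
lemma kalg_add: "kalg \<iota> \<Longrightarrow> \<iota> (x + y) = \<iota> x + \<iota> y" unfolding kalg_def by blast
lemma kalg_mult: "kalg \<iota> \<Longrightarrow> \<iota> (x * y) = \<iota> x * \<iota> y" unfolding kalg_def by blast
lemma kalg_comm: "kalg \<iota> \<Longrightarrow> \<iota> x * a = a * \<iota> x" unfolding kalg_def by blast
lemma kalg_zero: "kalg \<iota> \<Longrightarrow> \<iota> 0 = 0"
  using kalg_add[of \<iota> 0 0] by simp
lemma kalg_neg: "kalg \<iota> \<Longrightarrow> \<iota> (- x) = - \<iota> x"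
proof -
  assume a: "kalg \<iota>"
  have "\<iota> x + \<iota> (- x) = 0" using kalg_add[OF a, of x "-x"] kalg_zero[OF a] by simp
  then show ?thesis by (metis minus_unique)
qed
lemma kalg_pm1: "kalg \<iota> \<Longrightarrow> \<iota> ((-1) ^ k) = (-1) ^ k"
  by (induction k) (simp_all add: kalg_one kalg_mult kalg_neg del: power_minus1_even)
lemma kalg_half: "kalg \<iota> \<Longrightarrow> (2::'k::field) \<noteq> 0 \<Longrightarrow> \<iota> (1/2::'k) + \<iota> (1/2) = 1"
proof -
  assume a: "kalg \<iota>" "(2::'k) \<noteq> 0"
  have "(1/2::'k) + 1/2 = 1" using a(2) by (simp add: field_simps)
  then show ?thesis using kalg_add[OF a(1), of "1/2" "1/2"] kalg_one[OF a(1)] by simp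
qed


lemma bmul_right_one: "bmul b (False, {}) e = (if e = b then 1 else 0)"
  by (cases b) (auto simp: bmul_def)
lemma bmul_left_one: "bmul (False, {}) b e = (if e = b then 1 else 0)"
  by (cases b) (auto simp: bmul_def)
lemma bmul_left_g: "bmul (True, {}) (b, T) e = (if e = (\<not> b, T) then 1 else 0)"
  by (auto simp: bmul_def)
lemma bmul_right_g: "bmul (a, S) (True, {}) e = (if e = (\<not> a, S) then (-1) ^ card S else 0)"
  by (auto simp: bmul_def)

lemma bmul_nz:
  assumes "bmul (q,R) (r,S) (p,B) \<noteq> (0::'k::field)"
  shows "R \<inter> S = {} \<and> p = (q \<noteq> r) \<and> B = R \<union> S"
  using assms by (auto simp: bmul_def split: if_splits)

lemma tmul_at:
  fixes \<iota> :: "'k::field \<Rightarrow> 'a::ring_1"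
  assumes alg: "kalg \<iota>" and B: "B \<subseteq> {1..<n}"
  shows "tmul n \<iota> t u (p,B) = (\<Sum>R\<in>Pow B. \<Sum>q\<in>UNIV. \<iota> (bmul (q,R) (q \<noteq> p, B - R) (p,B)) * t (q,R) * u (q \<noteq> p, B - R))"
proof -
  have z: "\<iota> 0 = 0" using kalg_zero[OF alg] .
  define g where "g b = \<iota> (bmul b (fst b \<noteq> p, B - snd b) (p,B)) * t b * u (fst b \<noteq> p, B - snd b)" for b
  have inner: "(\<Sum>d\<in>Idx n. \<iota> (bmul b d (p,B)) * t b * u d) = g b" for b
  proof -
    obtain q R where b: "b = (q,R)" by fastforce
    have "(\<Sum>d\<in>Idx n. \<iota> (bmul b d (p,B)) * t b * u d)
       = (if (q \<noteq> p, B - R) \<in> Idx n then \<iota> (bmul b (q \<noteq> p, B - R) (p,B)) * t b * u (q \<noteq> p, B - R) else 0)"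
    proof (rule sum_single)
      fix d assume "d \<in> Idx n" "d \<noteq> (q \<noteq> p, B - R)"
      then obtain r S where d: "d = (r,S)" and ne: "(r,S) \<noteq> (q \<noteq> p, B - R)" by (cases d) auto
      have "bmul (q,R) (r,S) (p,B) = (0::'k)"
      proof (rule ccontr)
        assume "bmul (q,R) (r,S) (p,B) \<noteq> (0::'k)"
        from bmul_nz[OF this] have "R \<inter> S = {} \<and> p = (q \<noteq> r) \<and> B = R \<union> S" .
        then have "(r,S) = (q \<noteq> p, B - R)" by auto
        with ne show False by simp
      qed
      then show "\<iota> (bmul b d (p,B)) * t b * u d = 0" using b d z by simp
    qed simp
    also have "\<dots> = g b"
      using B by (auto simp: Idx_def g_def b)
    finally show ?thesis .
  qed
  have "tmul n \<iota> t u (p,B) = (\<Sum>b\<in>Idx n. g b)"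
    unfolding tmul_def using inner by simp
  also have "\<dots> = (\<Sum>b\<in>UNIV \<times> Pow B. g b)"
  proof (rule sum.mono_neutral_right)
    show "UNIV \<times> Pow B \<subseteq> Idx n" using B by (auto simp: Idx_def)
    show "\<forall>b\<in>Idx n - UNIV \<times> Pow B. g b = 0"
    proof
      fix b assume "b \<in> Idx n - UNIV \<times> Pow B"
      then obtain q R where b: "b = (q,R)" and nR: "\<not> R \<subseteq> B" by (cases b) auto
      have "bmul (q,R) (q \<noteq> p, B - R) (p,B) = (0::'k)"
        using nR by (auto simp: bmul_def)
      then show "g b = 0" using z by (simp add: g_def b)
    qed
  qed simp
  also have "\<dots> = (\<Sum>q\<in>UNIV. \<Sum>R\<in>Pow B. g (q,R))"
    by (simp add: sum.cartesian_product)
  also have "\<dots> = (\<Sum>R\<in>Pow B. \<Sum>q\<in>UNIV. g (q,R))"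
    by (rule sum.swap)
  finally show ?thesis by (simp add: g_def)
qed

lemma tmul_out:
  fixes \<iota> :: "'k::field \<Rightarrow> 'a::ring_1"
  assumes alg: "kalg \<iota>" and B: "\<not> B \<subseteq> {1..<n}"
  shows "tmul n \<iota> t u (p,B) = 0"
proof -
  have "\<iota> (bmul b d (p,B)) * t b * u d = 0" if "b \<in> Idx n" "d \<in> Idx n" for b d
  proof -
    obtain q R r S where bd: "b = (q,R)" "d = (r,S)" by fastforce
    have "bmul (q,R) (r,S) (p,B) = (0::'k)"
    proof (rule ccontr)
      assume "bmul (q,R) (r,S) (p,B) \<noteq> (0::'k)"
      from bmul_nz[OF this] have "B = R \<union> S" by simp
      with that bd B show False by (auto simp: Idx_def)
    qed
    then show ?thesis using bd kalg_zero[OF alg] by simp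
  qed
  then show ?thesis unfolding tmul_def by simp
qed

lemma sum_sum_delta:
  assumes "finite I" "finite J" "x \<in> I" "y \<in> J"
  shows "(\<Sum>a\<in>I. \<Sum>b\<in>J. if a = x \<and> b = y then f a b else 0) = f x y"
proof -
  have "(\<Sum>a\<in>I. \<Sum>b\<in>J. if a = x \<and> b = y then f a b else 0) = (\<Sum>a\<in>I. if a = x then f a y else 0)"
  proof (rule sum.cong)
    fix a assume "a \<in> I"
    show "(\<Sum>b\<in>J. if a = x \<and> b = y then f a b else 0) = (if a = x then f a y else 0)"
      using assms by (subst sum_single[of J y]) auto
  qed simp
  also have "\<dots> = f x y" using assms by (simp add: sum.delta)
  finally show ?thesis .
qed

lemma hhmul_dx:
  assumes i: "i \<in> {1..<n}"
  shows "hhmul n acc (delta_x i) (c,d) =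
    (\<Sum>b1\<in>Idx n. bmul b1 (False,{i}) c * (\<Sum>b2\<in>Idx n. bmul b2 (False,{}) d * acc (b1,b2)))
  + (\<Sum>b1\<in>Idx n. bmul b1 (True,{}) c * (\<Sum>b2\<in>Idx n. bmul b2 (False,{i}) d * acc (b1,b2)))"
proof -
  have in1: "(False,{i}) \<in> Idx n" "(False,{}) \<in> Idx n" "(True,{}) \<in> Idx n"
    using i by (auto simp: Idx_def)
  have inner: "(\<Sum>d1\<in>Idx n. \<Sum>d2\<in>Idx n. bmul b1 d1 c * bmul b2 d2 d * acc (b1, b2) * delta_x i (d1, d2))
     = bmul b1 (False,{i}) c * bmul b2 (False,{}) d * acc (b1,b2) + bmul b1 (True,{}) c * bmul b2 (False,{i}) d * acc (b1,b2)"
    for b1 b2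
  proof -
    let ?F = "\<lambda>d1 d2. bmul b1 d1 c * bmul b2 d2 d * acc (b1, b2)"
    have "(\<Sum>d1\<in>Idx n. \<Sum>d2\<in>Idx n. ?F d1 d2 * delta_x i (d1, d2))
      = (\<Sum>d1\<in>Idx n. \<Sum>d2\<in>Idx n. (if d1 = (False,{i}) \<and> d2 = (False,{}) then ?F d1 d2 else 0))
      + (\<Sum>d1\<in>Idx n. \<Sum>d2\<in>Idx n. (if d1 = (True,{}) \<and> d2 = (False,{i}) then ?F d1 d2 else 0))"
      by (simp only: sum.distrib[symmetric]) (intro sum.cong refl, simp add: delta_x_def)
    also have "\<dots> = ?F (False,{i}) (False,{}) + ?F (True,{}) (False,{i})"
      using in1 by (simp add: sum_sum_delta)
    finally show ?thesis .
  qed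
  have "hhmul n acc (delta_x i) (c,d) = (\<Sum>b1\<in>Idx n. \<Sum>b2\<in>Idx n.
     bmul b1 (False,{i}) c * bmul b2 (False,{}) d * acc (b1,b2) + bmul b1 (True,{}) c * bmul b2 (False,{i}) d * acc (b1,b2))"
    unfolding hhmul_def by (simp only: case_prod_conv inner)
  then show ?thesis
    by (simp add: sum.distrib sum_distrib_left mult.assoc)
qed

lemma col1: "(\<Sum>b2\<in>Idx n. bmul b2 (False,{}) d * f b2) = (if d \<in> Idx n then f d else (0::'k::field))"
  by (subst sum_single[of _ d]) (auto simp: bmul_right_one)

lemma col2e: "(\<Sum>b2\<in>Idx n. bmul b2 (False,{i}) (t,{}) * f b2) = (0::'k::field)"
proof -
  have "bmul b2 (False,{i}) (t,{}) = (0::'k)" for b2 by (cases b2) (auto simp: bmul_def)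
  then show ?thesis by simp
qed

lemma col2s:
  assumes "i \<in> {1..<n}"
  shows "(\<Sum>b2\<in>Idx n. bmul b2 (False,{i}) (t,{j}) * f b2) = (if j = i then f (t,{}) else (0::'k::field))"
proof (subst sum_single[of "Idx n" "(t,{})"])
  fix b2 :: hidx assume "b2 \<noteq> (t,{})"
  then show "bmul b2 (False,{i}) (t,{j}) * f b2 = (0::'k)"
    by (cases b2) (auto simp: bmul_def)
qed (auto simp: bmul_def Idx_def)

lemma col_b1: "(\<Sum>b1\<in>Idx n. X b1 * (if b1 = b0 \<and> P then v else 0)) = (if P \<and> b0 \<in> Idx n then X b0 * v else (0::'k::field))"
  by (subst sum_single[of _ b0]) auto

lemma Dl_foldl:
  assumes "sorted L" "distinct L" "set L \<subseteq> {1..<n}"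
  shows "(\<forall>c t. foldl (\<lambda>acc i. hhmul n acc (delta_x i)) (delta_g s) L (c,(t,{}))
            = (if c = (s, set L) \<and> t = s then 1 else (0::'k::field))) \<and>
         (\<forall>c t j. foldl (\<lambda>acc i. hhmul n acc (delta_x i)) (delta_g s) L (c,(t,{j}))
            = (if t = s \<and> j \<in> set L \<and> c = (\<not> s, set L - {j}) then (-1) ^ card {k\<in>set L. k < j} else (0::'k)))"
  using assms
proof (induction L rule: rev_induct)
  case Nil
  then show ?case by (auto simp: delta_g_def)
next
  case (snoc x L)
  define acc :: "hidx \<times> hidx \<Rightarrow> 'k" where "acc = foldl (\<lambda>acc i. hhmul n acc (delta_x i)) (delta_g s) L"
  have sL: "sorted L" "distinct L" "set L \<subseteq> {1..<n}" using snoc.prems by (auto simp: sorted_append)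
  have xr: "x \<in> {1..<n}" using snoc.prems by auto
  have xL: "x \<notin> set L" using snoc.prems by auto
  have le: "\<forall>l\<in>set L. l \<le> x" using snoc.prems(1) by (simp add: sorted_append)
  have lt: "\<forall>l\<in>set L. l < x"
  proof
    fix l assume "l \<in> set L"
    then have "l \<le> x" "l \<noteq> x" using le xL by auto
    then show "l < x" by simp
  qed
  have IH1: "acc (c,(t,{})) = (if c = (s, set L) \<and> t = s then 1 else 0)" for c t
    using snoc.IH[OF sL] unfolding acc_def by blast
  have IH2: "acc (c,(t,{j})) = (if t = s \<and> j \<in> set L \<and> c = (\<not> s, set L - {j}) then (-1) ^ card {k\<in>set L. k < j} else 0)" for c t j
    using snoc.IH[OF sL] unfolding acc_def by blast
  have fold: "foldl (\<lambda>acc i. hhmul n acc (delta_x i)) (delta_g s) (L @ [x]) = hhmul n acc (delta_x x)"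
    by (simp add: acc_def)
  have tI: "(t,{}) \<in> Idx n" for t by (simp add: Idx_def)
  have xI: "(t,{x}) \<in> Idx n" for t using xr by (simp add: Idx_def)
  have inL: "(s, set L) \<in> Idx n" using sL by (auto simp: Idx_def)
  have noinv: "{(a, b). a \<in> A \<and> b = x \<and> b < a} = {}" if "A \<subseteq> set L" for A
  proof (rule equals0I)
    fix p assume "p \<in> {(a, b). a \<in> A \<and> b = x \<and> b < a}"
    then obtain a where a: "a \<in> A" "x < a" by auto
    then have "a \<in> set L" using that by blast
    then have "a < x" using lt by blast
    with a show False by simp
  qed
  have bx: "bmul (r, A) (False,{x}) c = (if c = (r, insert x A) then 1 else (0::'k))" if "A \<subseteq> set L" for r A c
  proof -
    have "x \<notin> A" using that xL by auto
    then have "A \<inter> {x} = {}" by auto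
    then show ?thesis by (simp add: bmul_def noinv[OF that])
  qed
  have part1: "(\<Sum>b1\<in>Idx n. bmul b1 (True,{}) c * (\<Sum>b2\<in>Idx n. bmul b2 (False,{x}) (t,{}) * acc (b1,b2))) = 0" for c t
    by (simp add: col2e)
  show ?case
  proof (intro conjI allI)
    fix c t
    have "hhmul n acc (delta_x x) (c,(t,{})) = (\<Sum>b1\<in>Idx n. bmul b1 (False,{x}) c * acc (b1,(t,{})))"
      using xr by (simp add: hhmul_dx col1 col2e tI)
    also have "\<dots> = (\<Sum>b1\<in>Idx n. bmul b1 (False,{x}) c * (if b1 = (s, set L) \<and> t = s then 1 else 0))"
      by (simp add: IH1)
    also have "\<dots> = (if t = s then bmul (s, set L) (False,{x}) c else 0)"
      using inL by (subst col_b1) auto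
    also have "\<dots> = (if c = (s, set (L @ [x])) \<and> t = s then 1 else 0)"
      using bx[of "set L" s c] by auto
    finally show "foldl (\<lambda>acc i. hhmul n acc (delta_x i)) (delta_g s) (L @ [x]) (c,(t,{})) = (if c = (s, set (L @ [x])) \<and> t = s then 1 else (0::'k))"
      unfolding fold .
  next
    fix c t j
    show "foldl (\<lambda>acc i. hhmul n acc (delta_x i)) (delta_g s) (L @ [x]) (c,(t,{j}))
       = (if t = s \<and> j \<in> set (L @ [x]) \<and> c = (\<not> s, set (L @ [x]) - {j}) then (-1) ^ card {k\<in>set (L @ [x]). k < j} else (0::'k))"
    proof (cases "j = x")
      case True
      have "hhmul n acc (delta_x x) (c,(t,{j})) = (\<Sum>b1\<in>Idx n. bmul b1 (True,{}) c * acc (b1,(t,{})))"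
        using xr True xL by (simp add: hhmul_dx col1 col2s xI IH2)
      also have "\<dots> = (\<Sum>b1\<in>Idx n. bmul b1 (True,{}) c * (if b1 = (s, set L) \<and> t = s then 1 else 0))"
        by (simp add: IH1)
      also have "\<dots> = (if t = s then bmul (s, set L) (True,{}) c else 0)"
        using inL by (subst col_b1) auto
      also have "\<dots> = (if t = s \<and> j \<in> set (L @ [x]) \<and> c = (\<not> s, set (L @ [x]) - {j}) then (-1) ^ card {k\<in>set (L @ [x]). k < j} else 0)"
      proof -
        have e1: "set (L @ [x]) - {j} = set L" using True xL by auto
        have e2: "{k\<in>set (L @ [x]). k < j} = set L" using True lt by auto
        show ?thesis unfolding e1 e2 using True xL by (simp add: bmul_right_g)
      qed
      finally show ?thesis unfolding fold .
    next
      case False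
      have "hhmul n acc (delta_x x) (c,(t,{j})) = (\<Sum>b1\<in>Idx n. bmul b1 (False,{x}) c * (if (t,{j}) \<in> Idx n then acc (b1,(t,{j})) else 0))"
        using xr False by (simp add: hhmul_dx col1 col2s)
      also have "\<dots> = (if t = s \<and> j \<in> set (L @ [x]) \<and> c = (\<not> s, set (L @ [x]) - {j}) then (-1) ^ card {k\<in>set (L @ [x]). k < j} else 0)"
      proof (cases "(t,{j}) \<in> Idx n")
        case False
        then have "j \<notin> set (L @ [x])" using snoc.prems by (auto simp: Idx_def)
        then show ?thesis using False by simp
      next
        case jI: True
        have inL2: "(\<not> s, set L - {j}) \<in> Idx n" using sL by (auto simp: Idx_def)
        have "(\<Sum>b1\<in>Idx n. bmul b1 (False,{x}) c * (if (t,{j}) \<in> Idx n then acc (b1,(t,{j})) else 0))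
          = (\<Sum>b1\<in>Idx n. bmul b1 (False,{x}) c * (if b1 = (\<not> s, set L - {j}) \<and> (t = s \<and> j \<in> set L) then (-1) ^ card {k\<in>set L. k < j} else 0))"
          using jI by (intro sum.cong refl) (auto simp: IH2)
        also have "\<dots> = (if t = s \<and> j \<in> set L then bmul (\<not> s, set L - {j}) (False,{x}) c * (-1) ^ card {k\<in>set L. k < j} else 0)"
          using inL2 by (subst col_b1) auto
        also have "\<dots> = (if t = s \<and> j \<in> set (L @ [x]) \<and> c = (\<not> s, set (L @ [x]) - {j}) then (-1) ^ card {k\<in>set (L @ [x]). k < j} else 0)"
        proof (cases "j \<in> set L")
          case True
          have e1: "set (L @ [x]) - {j} = insert x (set L - {j})" using False by auto
          have e2: "{k\<in>set (L @ [x]). k < j} = {k\<in>set L. k < j}" using True lt by auto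
          have bx': "bmul (\<not> s, set L - {j}) (False,{x}) c = (if c = (\<not> s, set (L @ [x]) - {j}) then 1 else (0::'k))"
            using bx[of "set L - {j}" "\<not> s" c] e1 by simp
          have jj: "j \<in> set (L @ [x])" using True by simp
          show ?thesis unfolding e2 bx' using True jj by simp
        next
          case nj: False
          then show ?thesis using False by simp
        qed
        finally show ?thesis .
      qed
      finally show ?thesis unfolding fold .
    qed
  qed
qed

lemma Dl_gen:
  assumes b: "b \<in> Idx n"
  shows "Dl n b c (t,{}) = (if c = b \<and> t = fst b then 1 else (0::'k::field))"
    and "Dl n b c (t,{j}) = (if t = fst b \<and> j \<in> snd b \<and> c = (\<not> fst b, snd b - {j}) then (-1) ^ card {k\<in>snd b. k < j} else (0::'k))"
proof -
  obtain s S where bS: "b = (s,S)" by fastforce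
  have S: "S \<subseteq> {1..<n}" using b bS by (auto simp: Idx_def)
  then have fin: "finite S" using finite_subset by blast
  let ?L = "sorted_list_of_set S"
  have L: "sorted ?L" "distinct ?L" "set ?L \<subseteq> {1..<n}" using fin S by auto
  note X = Dl_foldl[OF L, of s, where 'k='k]
  have X1: "foldl (\<lambda>acc i. hhmul n acc (delta_x i)) (delta_g s) ?L (c,(t,{})) = (if c = (s, set ?L) \<and> t = s then 1 else (0::'k))"
    using X by blast
  show "Dl n b c (t,{}) = (if c = b \<and> t = fst b then 1 else (0::'k::field))"
    using X1 fin unfolding Dl_def bS by simp
  have X2: "foldl (\<lambda>acc i. hhmul n acc (delta_x i)) (delta_g s) ?L (c,(t,{j})) = (if t = s \<and> j \<in> set ?L \<and> c = (\<not> s, set ?L - {j}) then (-1) ^ card {k\<in>set ?L. k < j} else (0::'k))"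
    using X by blast
  show "Dl n b c (t,{j}) = (if t = fst b \<and> j \<in> snd b \<and> c = (\<not> fst b, snd b - {j}) then (-1) ^ card {k\<in>snd b. k < j} else (0::'k))"
    using X2 fin unfolding Dl_def bS by simp
qed

lemma id_delta_group:
  fixes \<iota> :: "'k::field \<Rightarrow> 'a::ring_1"
  assumes alg: "kalg \<iota>"
  shows "id_delta n \<iota> t (c,(p,{})) = (if c \<in> Idx n \<and> fst c = p then t c else 0)"
proof -
  have "id_delta n \<iota> t (c,(p,{})) = (\<Sum>b\<in>Idx n. \<iota> (Dl n b c (p,{})) * t b)"
    by (simp add: id_delta_def)
  also have "\<dots> = (if c \<in> Idx n then \<iota> (Dl n c c (p,{})) * t c else 0)"
  proof (rule sum_single)
    fix b assume "b \<in> Idx n" "b \<noteq> c"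
    then have "Dl n b c (p,{}) = (0::'k)" using Dl_gen(1)[of b n c p] by simp
    then show "\<iota> (Dl n b c (p,{})) * t b = 0" using kalg_zero[OF alg] by simp
  qed simp
  also have "\<dots> = (if c \<in> Idx n \<and> fst c = p then t c else 0)"
  proof -
    have "c \<in> Idx n \<Longrightarrow> Dl n c c (p,{}) = (if fst c = p then 1 else (0::'k))" using Dl_gen(1)[of c n c p] by auto
    then show ?thesis using kalg_zero[OF alg] kalg_one[OF alg] by auto
  qed
  finally show ?thesis .
qed

lemma id_delta_single:
  fixes \<iota> :: "'k::field \<Rightarrow> 'a::ring_1"
  assumes alg: "kalg \<iota>" and j: "j \<in> {1..<n}"
  shows "id_delta n \<iota> t ((r,S),(p,{j})) = (if r = (\<not> p) \<and> j \<notin> S \<and> S \<subseteq> {1..<n} then \<iota> ((-1) ^ card {k\<in>S. k < j}) * t (p, insert j S) else 0)"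
proof -
  let ?b0 = "(p, insert j S)"
  have "id_delta n \<iota> t ((r,S),(p,{j})) = (\<Sum>b\<in>Idx n. \<iota> (Dl n b (r,S) (p,{j})) * t b)"
    by (simp add: id_delta_def)
  also have "\<dots> = (if ?b0 \<in> Idx n then \<iota> (Dl n ?b0 (r,S) (p,{j})) * t ?b0 else 0)"
  proof (rule sum_single)
    fix b assume b: "b \<in> Idx n" "b \<noteq> ?b0"
    obtain s S' where bs: "b = (s,S')" by fastforce
    have "Dl n b (r,S) (p,{j}) = (0::'k)"
    proof (rule ccontr)
      assume "Dl n b (r,S) (p,{j}) \<noteq> (0::'k)"
      then have "p = s \<and> j \<in> S' \<and> S = S' - {j}" using Dl_gen(2)[OF b(1), of "(r,S)" p j] bs
        by (auto split: if_splits)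
      then have "b = ?b0" using bs by auto
      with b show False by simp
    qed
    then show "\<iota> (Dl n b (r,S) (p,{j})) * t b = 0" using kalg_zero[OF alg] by simp
  qed simp
  also have "\<dots> = (if r = (\<not> p) \<and> j \<notin> S \<and> S \<subseteq> {1..<n} then \<iota> ((-1) ^ card {k\<in>S. k < j}) * t (p, insert j S) else 0)"
  proof (cases "?b0 \<in> Idx n")
    case True
    then have S: "S \<subseteq> {1..<n}" by (auto simp: Idx_def)
    have c: "{k \<in> insert j S. k < j} = {k\<in>S. k < j}" by auto
    show ?thesis
    proof (cases "r = (\<not> p) \<and> j \<notin> S")
      case True
      then have "insert j S - {j} = S" by auto
      moreover have "Dl n ?b0 (r,S) (p,{j}) = ((-1) ^ card {k\<in>S. k < j} :: 'k)"
        using True Dl_gen(2)[OF \<open>?b0 \<in> Idx n\<close>, of "(r,S)" p j] c \<open>insert j S - {j} = S\<close> by simp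
      ultimately show ?thesis using True S \<open>?b0 \<in> Idx n\<close> by simp
    next
      case False
      have "Dl n ?b0 (r,S) (p,{j}) = (0::'k)"
        using False Dl_gen(2)[OF \<open>?b0 \<in> Idx n\<close>, of "(r,S)" p j] by auto
      then show ?thesis using False True kalg_zero[OF alg] by auto
    qed
  next
    case False
    then have "\<not> S \<subseteq> {1..<n}" using j by (auto simp: Idx_def)
    then show ?thesis using False by auto
  qed
  finally show ?thesis .
qed

lemma ttmul_left:
  fixes \<iota> :: "'k::field \<Rightarrow> 'a::ring_1"
  assumes alg: "kalg \<iota>" and d: "d \<in> Idx n"
  shows "ttmul n \<iota> (tens_one e) X (c,d) = tmul n \<iota> e (\<lambda>d1. X (d1,d)) c"
proof -
  have z: "\<iota> 0 = 0" using kalg_zero[OF alg] .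
  have F0: "(False,{}) \<in> Idx n" by (simp add: Idx_def)
  have inner: "(\<Sum>b2\<in>Idx n. \<Sum>d2\<in>Idx n. \<iota> (bmul b1 d1 c * bmul b2 d2 d) * tens_one e (b1, b2) * X (d1, d2))
     = \<iota> (bmul b1 d1 c) * e b1 * X (d1,d)" for b1 d1
  proof -
    have "(\<Sum>b2\<in>Idx n. \<Sum>d2\<in>Idx n. \<iota> (bmul b1 d1 c * bmul b2 d2 d) * tens_one e (b1, b2) * X (d1, d2))
      = (\<Sum>b2\<in>Idx n. \<Sum>d2\<in>Idx n. if b2 = (False,{}) \<and> d2 = d then \<iota> (bmul b1 d1 c) * e b1 * X (d1, d2) else 0)"
      by (intro sum.cong refl) (auto simp: tens_one_def bmul_left_one z)
    also have "\<dots> = \<iota> (bmul b1 d1 c) * e b1 * X (d1,d)"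
      using F0 d by (subst sum_sum_delta) auto
    finally show ?thesis .
  qed
  have "ttmul n \<iota> (tens_one e) X (c,d) = (\<Sum>b1\<in>Idx n. \<Sum>d1\<in>Idx n. \<Sum>b2\<in>Idx n. \<Sum>d2\<in>Idx n.
      \<iota> (bmul b1 d1 c * bmul b2 d2 d) * tens_one e (b1, b2) * X (d1, d2))"
  proof -
    have "ttmul n \<iota> (tens_one e) X (c,d) = (\<Sum>b1\<in>Idx n. \<Sum>b2\<in>Idx n. \<Sum>d1\<in>Idx n. \<Sum>d2\<in>Idx n. \<iota> (bmul b1 d1 c * bmul b2 d2 d) * tens_one e (b1, b2) * X (d1, d2))"
      by (simp add: ttmul_def)
    also have "\<dots> = (\<Sum>b1\<in>Idx n. \<Sum>d1\<in>Idx n. \<Sum>b2\<in>Idx n. \<Sum>d2\<in>Idx n. \<iota> (bmul b1 d1 c * bmul b2 d2 d) * tens_one e (b1, b2) * X (d1, d2))"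
      by (rule sum.cong[OF refl], rule sum.swap)
    finally show ?thesis .
  qed
  also have "\<dots> = tmul n \<iota> e (\<lambda>d1. X (d1,d)) c"
    unfolding tmul_def by (simp add: inner)
  finally show ?thesis .
qed

lemma ttmul_right:
  fixes \<iota> :: "'k::field \<Rightarrow> 'a::ring_1"
  assumes alg: "kalg \<iota>" and d: "d \<in> Idx n"
  shows "ttmul n \<iota> X (tens_one e) (c,d) = tmul n \<iota> (\<lambda>b1. X (b1,d)) e c"
proof -
  have z: "\<iota> 0 = 0" using kalg_zero[OF alg] .
  have F0: "(False,{}) \<in> Idx n" by (simp add: Idx_def)
  have inner: "(\<Sum>b2\<in>Idx n. \<Sum>d2\<in>Idx n. \<iota> (bmul b1 d1 c * bmul b2 d2 d) * X (b1, b2) * tens_one e (d1, d2))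
     = \<iota> (bmul b1 d1 c) * X (b1,d) * e d1" for b1 d1
  proof -
    have "(\<Sum>b2\<in>Idx n. \<Sum>d2\<in>Idx n. \<iota> (bmul b1 d1 c * bmul b2 d2 d) * X (b1, b2) * tens_one e (d1, d2))
      = (\<Sum>b2\<in>Idx n. \<Sum>d2\<in>Idx n. if b2 = d \<and> d2 = (False,{}) then \<iota> (bmul b1 d1 c) * X (b1, b2) * e d1 else 0)"
      by (intro sum.cong refl) (auto simp: tens_one_def bmul_right_one z)
    also have "\<dots> = \<iota> (bmul b1 d1 c) * X (b1,d) * e d1"
      using F0 d by (subst sum_sum_delta) auto
    finally show ?thesis .
  qed
  have "ttmul n \<iota> X (tens_one e) (c,d) = (\<Sum>b1\<in>Idx n. \<Sum>d1\<in>Idx n. \<Sum>b2\<in>Idx n. \<Sum>d2\<in>Idx n.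
      \<iota> (bmul b1 d1 c * bmul b2 d2 d) * X (b1, b2) * tens_one e (d1, d2))"
  proof -
    have "ttmul n \<iota> X (tens_one e) (c,d) = (\<Sum>b1\<in>Idx n. \<Sum>b2\<in>Idx n. \<Sum>d1\<in>Idx n. \<Sum>d2\<in>Idx n. \<iota> (bmul b1 d1 c * bmul b2 d2 d) * X (b1, b2) * tens_one e (d1, d2))"
      by (simp add: ttmul_def)
    also have "\<dots> = (\<Sum>b1\<in>Idx n. \<Sum>d1\<in>Idx n. \<Sum>b2\<in>Idx n. \<Sum>d2\<in>Idx n. \<iota> (bmul b1 d1 c * bmul b2 d2 d) * X (b1, b2) * tens_one e (d1, d2))"
      by (rule sum.cong[OF refl], rule sum.swap)
    finally show ?thesis .
  qed
  also have "\<dots> = tmul n \<iota> (\<lambda>b1. X (b1,d)) e c"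
    unfolding tmul_def by (simp add: inner)
  finally show ?thesis .
qed

lemma ttmul_out:
  fixes \<iota> :: "'k::field \<Rightarrow> 'a::ring_1"
  assumes alg: "kalg \<iota>" and d: "d \<notin> Idx n"
  shows "ttmul n \<iota> U V (c,d) = 0"
proof -
  have "bmul b2 d2 d = (0::'k)" if "b2 \<in> Idx n" "d2 \<in> Idx n" for b2 d2
  proof (rule ccontr)
    obtain q R r S p B where e: "b2 = (q,R)" "d2 = (r,S)" "d = (p,B)" by (metis prod.exhaust)
    assume "bmul b2 d2 d \<noteq> (0::'k)"
    then have "B = R \<union> S \<and> p = (q \<noteq> r)" using bmul_nz e by metis
    with that d e show False by (auto simp: Idx_def)
  qed
  then show ?thesis unfolding ttmul_def using kalg_zero[OF alg] by simp
qed

definition form3 :: "nat \<Rightarrow> (hidx \<Rightarrow> 'a::ring_1) \<Rightarrow> 'a \<Rightarrow> 'a \<Rightarrow> (nat \<Rightarrow> 'a) \<Rightarrow> (nat \<Rightarrow> 'a) \<Rightarrow> bool" where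
  "form3 n t a0 a1 g f \<longleftrightarrow> t (False,{}) = a0 \<and> t (True,{}) = a1
     \<and> (\<forall>i\<in>{1..<n}. t (True,{i}) = g i \<and> t (False,{i}) = f i)
     \<and> (\<forall>p B. B \<noteq> {} \<and> (\<forall>i\<in>{1..<n}. B \<noteq> {i}) \<longrightarrow> t (p,B) = 0)"

lemma form3_eq:
  assumes "form3 n t a0 a1 g f" "form3 n u a0 a1 g f"
  shows "t = u"
proof
  fix x :: hidx
  obtain p B where x: "x = (p,B)" by fastforce
  show "t x = u x"
  proof (cases "B = {}")
    case True
    then show ?thesis using assms x by (cases p) (auto simp: form3_def)
  next
    case False
    show ?thesis
    proof (cases "\<exists>i\<in>{1..<n}. B = {i}")
      case True
      then obtain i where "i \<in> {1..<n}" "B = {i}" by blast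
      then show ?thesis using assms x by (cases p) (auto simp: form3_def)
    next
      case nf: False
      then show ?thesis using assms x False unfolding form3_def by metis
    qed
  qed
qed

lemma form3_supp:
  assumes "form3 n t a0 a1 g (\<lambda>_. 0)" "t (q,R) \<noteq> 0"
  shows "R = {} \<or> (q \<and> (\<exists>i\<in>{1..<n}. R = {i}))"
proof (rule ccontr)
  assume a: "\<not> (R = {} \<or> (q \<and> (\<exists>i\<in>{1..<n}. R = {i})))"
  show False
  proof (cases "\<exists>i\<in>{1..<n}. R = {i}")
    case True
    then obtain i where i: "i \<in> {1..<n}" "R = {i}" by blast
    with a have "\<not> q" by auto
    then show False using assms i unfolding form3_def by auto
  next
    case False
    then show False using assms a unfolding form3_def by metis
  qed
qed

lemma bmul_anti:
  assumes "i \<noteq> j"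
  shows "bmul (True,{i}) (True,{j}) e = - (bmul (True,{j}) (True,{i}) e :: 'k::field)"
proof (cases "i < j")
  case True
  have s1: "{(s, t). s = i \<and> t = j \<and> t < s} = {}" using True by auto
  have s2: "{(s, t). s = j \<and> t = i \<and> t < s} = {(j,i)}" using True by auto
  show ?thesis using assms by (simp add: bmul_def s1 s2 insert_commute)
next
  case False
  then have F: "j < i" using assms by simp
  have s1: "{(s, t). s = i \<and> t = j \<and> t < s} = {(i,j)}" using F by auto
  have s2: "{(s, t). s = j \<and> t = i \<and> t < s} = {}" using F by auto
  show ?thesis using assms by (simp add: bmul_def s1 s2 insert_commute)
qed

lemma Pow_sing: "Pow {i} = {{}, {i}}" by auto

lemma half_cancel:
  fixes \<iota> :: "'k::field \<Rightarrow> 'a::ring_1"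
  assumes alg: "kalg \<iota>" and char: "(2::'k) \<noteq> 0" and "S + S = (0::'a)"
  shows "S = 0"
proof -
  have "S = (\<iota> (1/2) + \<iota> (1/2)) * S" using kalg_half[OF alg char] by simp
  also have "\<dots> = \<iota> (1/2) * (S + S)" by (simp add: algebra_simps)
  finally show ?thesis using assms(3) by simp
qed

lemma form3_mult:
  fixes \<iota> :: "'k::field \<Rightarrow> 'a::ring_1"
  assumes alg: "kalg \<iota>" and char: "(2::'k) \<noteq> 0"
    and ft: "form3 n t a0 a1 g (\<lambda>_. 0)" and fu: "form3 n u b0 b1 d (\<lambda>_. 0)"
    and sym: "\<forall>i\<in>{1..<n}. \<forall>j\<in>{1..<n}. g i * d j = g j * d i"
  shows "form3 n (tmul n \<iota> t u) (a0*b0 + a1*b1) (a0*b1 + a1*b0) (\<lambda>i. a0 * d i + g i * b0) (\<lambda>i. a1 * d i - g i * b1)"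
proof -
  have o: "\<iota> 1 = 1" using kalg_one[OF alg] .
  have z: "\<iota> 0 = 0" using kalg_zero[OF alg] .
  have ng: "\<iota> (-1) = -1" using kalg_neg[OF alg, of 1] o by simp
  have t0: "t (False,{}) = a0" and t1: "t (True,{}) = a1" using ft by (auto simp: form3_def)
  have u0: "u (False,{}) = b0" and u1: "u (True,{}) = b1" using fu by (auto simp: form3_def)
  have tT: "t (True,{i}) = g i" and tF: "t (False,{i}) = 0" if "i \<in> {1..<n}" for i
    using ft that by (auto simp: form3_def)
  have uT: "u (True,{i}) = d i" and uF: "u (False,{i}) = 0" if "i \<in> {1..<n}" for i
    using fu that by (auto simp: form3_def)
  have c1: "tmul n \<iota> t u (False,{}) = a0*b0 + a1*b1"
    by (simp add: tmul_at[OF alg] UNIV_bool bmul_left_one bmul_left_g o t0 t1 u0 u1)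
  have c2: "tmul n \<iota> t u (True,{}) = a0*b1 + a1*b0"
    by (simp add: tmul_at[OF alg] UNIV_bool bmul_left_one bmul_left_g o t0 t1 u0 u1)
  have c3: "tmul n \<iota> t u (True,{i}) = a0 * d i + g i * b0" if i: "i \<in> {1..<n}" for i
    using i by (simp add: tmul_at[OF alg] Pow_sing UNIV_bool bmul_left_one bmul_left_g bmul_right_one bmul_right_g
        o z t0 t1 u0 u1 tT tF uT uF)
  have c4: "tmul n \<iota> t u (False,{i}) = a1 * d i - g i * b1" if i: "i \<in> {1..<n}" for i
    using i by (simp add: tmul_at[OF alg] Pow_sing UNIV_bool bmul_left_one bmul_left_g bmul_right_one bmul_right_g
        o z ng t0 t1 u0 u1 tT tF uT uF)
  have c5: "tmul n \<iota> t u (p,B) = 0" if B: "B \<noteq> {}" "\<forall>i\<in>{1..<n}. B \<noteq> {i}" for p B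
  proof (cases "B \<subseteq> {1..<n}")
    case False
    then show ?thesis using tmul_out[OF alg] by blast
  next
    case Br: True
    define G where "G R = (\<Sum>q\<in>UNIV. \<iota> (bmul (q,R) (q \<noteq> p, B - R) (p,B)) * t (q,R) * u (q \<noteq> p, B - R))" for R
    have S: "tmul n \<iota> t u (p,B) = sum G (Pow B)" by (simp add: tmul_at[OF alg Br] G_def)
    have Bns: "B \<noteq> {i}" for i
    proof
      assume "B = {i}"
      then have "i \<in> {1..<n}" using Br by auto
      with B \<open>B = {i}\<close> show False by auto
    qed
    define P where "P R \<longleftrightarrow> p = False \<and> (\<exists>i. R = {i}) \<and> (\<exists>j. B - R = {j})" for R
    have nz: "P R" if "R \<subseteq> B" "t (q,R) \<noteq> 0" "u (q \<noteq> p, B - R) \<noteq> 0" for R q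
    proof -
      have h1: "R = {} \<or> (q \<and> (\<exists>i\<in>{1..<n}. R = {i}))" using form3_supp[OF ft that(2)] .
      have h2: "B - R = {} \<or> ((q \<noteq> p) \<and> (\<exists>i\<in>{1..<n}. B - R = {i}))" using form3_supp[OF fu that(3)] .
      have "R \<noteq> {}" using h2 B(1) Bns by auto
      then obtain i where i: "q" "R = {i}" using h1 by auto
      have "B - R \<noteq> {}" using that(1) i B(1) Bns by auto
      then obtain j where j: "q \<noteq> p" "B - R = {j}" using h2 by auto
      show ?thesis unfolding P_def using i j by auto
    qed
    have G0: "G R = 0" if "R \<subseteq> B" "\<not> P R" for R
      unfolding G_def
    proof (rule sum.neutral, rule ballI)
      fix q :: bool
      show "\<iota> (bmul (q,R) (q \<noteq> p, B - R) (p,B)) * t (q,R) * u (q \<noteq> p, B - R) = 0"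
      proof -
        have "t (q,R) = 0 \<or> u (q \<noteq> p, B - R) = 0" using nz[OF that(1), of q] that(2) by blast
        then show ?thesis by (elim disjE) (simp_all only: mult_zero_right mult_zero_left)
      qed
    qed
    have PBR: "P (B - R) = P R" if "R \<subseteq> B" for R
    proof -
      have "B - (B - R) = R" using that by auto
      then show ?thesis unfolding P_def by auto
    qed
    have key: "G (B - R) = - G R" if R: "R \<subseteq> B" for R
    proof (cases "P R")
      case True
      then obtain i j where pF: "p = False" and i: "R = {i}" and j: "B - R = {j}" unfolding P_def by blast
      have ij: "i \<noteq> j" using i j by auto
      have ir: "i \<in> {1..<n}" and jr: "j \<in> {1..<n}" using i j R Br by auto
      have BR: "B - (B - R) = {i}" using R i by auto
      have GR: "G R = \<iota> (bmul (True,{i}) (True,{j}) (False,B)) * g i * d j"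
      proof -
        have j': "B - {i} = {j}" using i j by simp
        show ?thesis unfolding G_def using ir jr by (simp add: UNIV_bool pF i j' tF tT uT z)
      qed
      have GBR: "G (B - R) = \<iota> (bmul (True,{j}) (True,{i}) (False,B)) * g j * d i"
      proof -
        have BR': "B - {j} = {i}" using BR j by simp
        show ?thesis unfolding G_def using ir jr by (simp add: UNIV_bool pF j BR' tF tT uT z)
      qed
      have "G (B - R) = \<iota> (- bmul (True,{i}) (True,{j}) (False,B)) * (g j * d i)"
        using GBR bmul_anti[OF ij[symmetric], of "(False,B)", where 'k='k] by (simp add: mult.assoc)
      also have "\<dots> = - (\<iota> (bmul (True,{i}) (True,{j}) (False,B)) * (g i * d j))"
        using sym ir jr kalg_neg[OF alg] by simp
      finally show ?thesis using GR by (simp add: mult.assoc)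
    next
      case False
      then show ?thesis using G0[OF R] G0[of "B - R"] PBR[OF R] by auto
    qed
    have "sum G (Pow B) = sum (\<lambda>R. G (B - R)) (Pow B)"
      by (rule sum.reindex_bij_witness[of _ "\<lambda>R. B - R" "\<lambda>R. B - R"]) (auto simp: double_diff)
    also have "\<dots> = - sum G (Pow B)"
      by (simp add: key sum_negf)
    finally have "sum G (Pow B) + sum G (Pow B) = 0" by (simp add: eq_neg_iff_add_eq_0)
    then have "sum G (Pow B) = 0" using half_cancel[OF alg char] by blast
    then show ?thesis using S by simp
  qed
  show ?thesis unfolding form3_def using c1 c2 c3 c4 c5 by blast
qed

definition rhoF :: "('k::field \<Rightarrow> 'a::ring_1) \<Rightarrow> nat \<Rightarrow> (nat \<Rightarrow> 'a) \<Rightarrow> 'a \<Rightarrow> hidx \<Rightarrow> 'a" where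
  "rhoF \<iota> n w a = (\<lambda>e. tens (\<iota> (1/2) * a) (False, {}) e + tens (\<iota> (1/2) * a) (True, {}) e
                         - (\<Sum>i\<in>{1..<n}. tens (w i * a) (True, {i}) e))"

lemma tens_sum_hit:
  assumes "finite I" "k \<in> I"
  shows "(\<Sum>i\<in>I. tens (f i) (True,{i}) (True,{k})) = f k"
  using assms by (subst sum_single[of I k]) (auto simp: tens_def)

lemma tens_sum_miss:
  assumes "\<forall>i\<in>I. e \<noteq> (True,{i})"
  shows "(\<Sum>i\<in>I. tens (f i) (True,{i}) e) = 0"
  using assms by (intro sum.neutral) (auto simp: tens_def)

lemma rhoF_form:
  "form3 n (rhoF \<iota> n w a) (\<iota> (1/2) * a) (\<iota> (1/2) * a) (\<lambda>i. - (w i * a)) (\<lambda>_. 0)"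
proof -
  have m1: "\<forall>i\<in>{1..<n}. (False,{}) \<noteq> (True,{i})" "\<forall>i\<in>{1..<n}. (True,{}) \<noteq> (True,{i})" by auto
  have m2: "\<forall>i\<in>{1..<n}. (False,{k}) \<noteq> (True,{i})" for k by auto
  have m3: "\<forall>i\<in>{1..<n}. (p,B) \<noteq> (True,{i})" if "\<forall>i\<in>{1..<n}. B \<noteq> {i}" for p B using that by auto
  show ?thesis
    unfolding form3_def rhoF_def
    using m1 m2 m3 by (auto simp: tens_sum_miss tens_sum_hit tens_def)
qed

lemma form3_cong:
  assumes "form3 n t a0 a1 g f" "a0 = a0'" "a1 = a1'" "\<forall>i\<in>{1..<n}. g i = g' i" "\<forall>i\<in>{1..<n}. f i = f' i"
  shows "form3 n t a0' a1' g' f'"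
  using assms unfolding form3_def by auto

lemma form3_zero: "form3 n (\<lambda>_. 0) 0 0 (\<lambda>_. 0) (\<lambda>_. 0)"
  unfolding form3_def by auto

lemma Dl_empty: "B \<noteq> {} \<Longrightarrow> Dl n (s,{}) c (p,B) = (0::'k::field)"
  by (simp add: Dl_def delta_g_def)

lemma Dl_Tsing:
  assumes i: "i \<in> {1..<n}" and B: "B \<noteq> {}" "B \<noteq> {i}"
  shows "Dl n (True,{i}) c (p,B) = (0::'k::field)"
proof -
  have "Dl n (True,{i}) c (p,B) = hhmul n (delta_g True) (delta_x i) (c,(p,B))"
    by (simp add: Dl_def)
  also have "\<dots> = (0::'k)"
  proof -
    have z1: "(\<Sum>b2\<in>Idx n. bmul b2 (False,{}) (p,B) * (delta_g True (b1,b2) :: 'k)) = 0" for b1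
      by (intro sum.neutral) (auto simp: delta_g_def bmul_right_one B)
    have z2: "(\<Sum>b2\<in>Idx n. bmul b2 (False,{i}) (p,B) * (delta_g True (b1,b2) :: 'k)) = 0" for b1
      by (intro sum.neutral) (auto simp: delta_g_def bmul_left_g B)
    show ?thesis using i by (simp add: hhmul_dx z1 z2)
  qed
  finally show ?thesis .
qed

context
  fixes \<iota> :: "'k::field \<Rightarrow> 'a::ring_1" and \<rho> :: "'a \<Rightarrow> hidx \<Rightarrow> 'a" and n :: nat and w :: "nat \<Rightarrow> 'a"
  assumes alg: "kalg \<iota>" and eq: "\<forall>a. \<rho> a = rhoF \<iota> n w a"
begin

lemma RF: "form3 n (\<rho> a) (\<iota> (1/2) * a) (\<iota> (1/2) * a) (\<lambda>i. - (w i * a)) (\<lambda>_. 0)"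
  using eq rhoF_form by metis

lemma RFz: "\<rho> a (p,B) = 0" if "B \<noteq> {}" "\<forall>i\<in>{1..<n}. B \<noteq> {i}"
  using RF[of a] that unfolding form3_def by blast

lemma r0: "\<rho> a (False,{}) = \<iota> (1/2) * a" and r1: "\<rho> a (True,{}) = \<iota> (1/2) * a"
  using RF[of a] unfolding form3_def by auto

lemma rT: "i \<in> {1..<n} \<Longrightarrow> \<rho> a (True,{i}) = - (w i * a)"
  and rF: "i \<in> {1..<n} \<Longrightarrow> \<rho> a (False,{i}) = 0"
  using RF[of a] unfolding form3_def by auto

lemma XF0: "form3 n (\<lambda>d1. id_delta n \<iota> (\<rho> a) (d1,(False,{}))) (\<iota> (1/2) * a) 0 (\<lambda>_. 0) (\<lambda>_. 0)"
  unfolding form3_def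
proof (intro conjI allI impI ballI)
  show "id_delta n \<iota> (\<rho> a) ((False, {}), False, {}) = \<iota> (1/2) * a"
    by (simp add: id_delta_group[OF alg] r0 Idx_def)
  show "id_delta n \<iota> (\<rho> a) ((True, {}), False, {}) = 0"
    by (simp add: id_delta_group[OF alg])
  fix i assume i: "i \<in> {1..<n}"
  show "id_delta n \<iota> (\<rho> a) ((True, {i}), False, {}) = 0"
    by (simp add: id_delta_group[OF alg])
  show "id_delta n \<iota> (\<rho> a) ((False, {i}), False, {}) = 0"
    using i by (simp add: id_delta_group[OF alg] rF)
next
  fix p B assume "B \<noteq> {} \<and> (\<forall>i\<in>{1..<n}. B \<noteq> {i})"
  then show "id_delta n \<iota> (\<rho> a) ((p, B), False, {}) = 0"
    using RFz by (simp add: id_delta_group[OF alg])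
qed

lemma XT0: "form3 n (\<lambda>d1. id_delta n \<iota> (\<rho> a) (d1,(True,{}))) 0 (\<iota> (1/2) * a) (\<lambda>i. - (w i * a)) (\<lambda>_. 0)"
  unfolding form3_def
proof (intro conjI allI impI ballI)
  show "id_delta n \<iota> (\<rho> a) ((True, {}), True, {}) = \<iota> (1/2) * a"
    by (simp add: id_delta_group[OF alg] r1 Idx_def)
  show "id_delta n \<iota> (\<rho> a) ((False, {}), True, {}) = 0"
    by (simp add: id_delta_group[OF alg])
  fix i assume i: "i \<in> {1..<n}"
  show "id_delta n \<iota> (\<rho> a) ((True, {i}), True, {}) = - (w i * a)"
    using i by (simp add: id_delta_group[OF alg] rT Idx_def)
  show "id_delta n \<iota> (\<rho> a) ((False, {i}), True, {}) = 0"
    by (simp add: id_delta_group[OF alg])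
next
  fix p B assume "B \<noteq> {} \<and> (\<forall>i\<in>{1..<n}. B \<noteq> {i})"
  then show "id_delta n \<iota> (\<rho> a) ((p, B), True, {}) = 0"
    using RFz by (simp add: id_delta_group[OF alg])
qed

lemma XFj: assumes j: "j \<in> {1..<n}"
  shows "form3 n (\<lambda>d1. id_delta n \<iota> (\<rho> a) (d1,(False,{j}))) 0 0 (\<lambda>_. 0) (\<lambda>_. 0)"
proof -
  have X0: "(\<lambda>d1. id_delta n \<iota> (\<rho> a) (d1,(False,{j}))) = (\<lambda>_. 0)"
  proof (rule ext)
    fix d1 :: hidx
    obtain r S where d1: "d1 = (r,S)" by fastforce
    have "\<rho> a (False, insert j S) = 0"
    proof (cases "\<exists>i\<in>{1..<n}. insert j S = {i}")
      case True
      then obtain i where i: "i \<in> {1..<n}" "insert j S = {i}" by blast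
      then have "\<rho> a (False,{i}) = 0" using rF by blast
      then show ?thesis by (simp only: i(2))
    next
      case False
      then show ?thesis by (intro RFz) auto
    qed
    then show "id_delta n \<iota> (\<rho> a) (d1,(False,{j})) = 0" using d1 by (simp add: id_delta_single[OF alg j])
  qed
  show ?thesis unfolding X0 by (rule form3_zero)
qed

lemma XTj: assumes j: "j \<in> {1..<n}"
  shows "form3 n (\<lambda>d1. id_delta n \<iota> (\<rho> a) (d1,(True,{j}))) (- (w j * a)) 0 (\<lambda>_. 0) (\<lambda>_. 0)"
proof -
  have o: "\<iota> 1 = 1" using kalg_one[OF alg] .
  have nz: "\<rho> a (True, insert j S) = 0" if "j \<notin> S" "S \<noteq> {}" for S
  proof (rule RFz)
    show "insert j S \<noteq> {}" by simp
    show "\<forall>i\<in>{1..<n}. insert j S \<noteq> {i}" using that by auto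
  qed
  show ?thesis unfolding form3_def
  proof (intro conjI allI impI ballI)
    show "id_delta n \<iota> (\<rho> a) ((False, {}), True, {j}) = - (w j * a)"
      using j by (simp add: id_delta_single[OF alg j] rT o)
    show "id_delta n \<iota> (\<rho> a) ((True, {}), True, {j}) = 0"
      by (simp add: id_delta_single[OF alg j])
    fix i assume i: "i \<in> {1..<n}"
    show "id_delta n \<iota> (\<rho> a) ((True, {i}), True, {j}) = 0"
      by (simp add: id_delta_single[OF alg j])
    show "id_delta n \<iota> (\<rho> a) ((False, {i}), True, {j}) = 0"
    proof (cases "i = j")
      case True
      then show ?thesis by (simp add: id_delta_single[OF alg j])
    next
      case False
      then have "\<rho> a (True, insert j {i}) = 0" by (intro nz) auto
      then show ?thesis by (simp add: id_delta_single[OF alg j])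
    qed
  next
    fix p B assume B: "B \<noteq> {} \<and> (\<forall>i\<in>{1..<n}. B \<noteq> {i})"
    show "id_delta n \<iota> (\<rho> a) ((p, B), True, {j}) = 0"
    proof (cases "j \<in> B")
      case True
      then show ?thesis by (simp add: id_delta_single[OF alg j])
    next
      case False
      then have "\<rho> a (True, insert j B) = 0" using B by (intro nz) auto
      then show ?thesis by (simp add: id_delta_single[OF alg j])
    qed
  qed
qed

lemma Xother:
  assumes B: "B \<noteq> {}" "\<forall>i\<in>{1..<n}. B \<noteq> {i}"
  shows "(\<lambda>d1. id_delta n \<iota> (\<rho> a) (d1,(p,B))) = (\<lambda>_. 0)"
proof (rule ext)
  fix d1 :: hidx
  have "\<iota> (Dl n b d1 (p,B)) * \<rho> a b = 0" for b
  proof -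
    obtain q R where b: "b = (q,R)" by fastforce
    show ?thesis
    proof (cases "\<rho> a (q,R) = 0")
      case True
      then show ?thesis using b by simp
    next
      case False
      have "R = {} \<or> (q \<and> (\<exists>i\<in>{1..<n}. R = {i}))" using form3_supp[OF RF False] .
      then have "Dl n (q,R) d1 (p,B) = (0::'k)"
      proof
        assume "R = {}"
        then show ?thesis using Dl_empty[OF B(1)] by simp
      next
        assume "q \<and> (\<exists>i\<in>{1..<n}. R = {i})"
        then obtain i where "q" "i \<in> {1..<n}" "R = {i}" by blast
        moreover have "Dl n (True,{i}) d1 (p,B) = (0::'k)"
          by (rule Dl_Tsing) (use \<open>i \<in> {1..<n}\<close> B in auto)
        ultimately show ?thesis by simp
      qed
      then show ?thesis using b kalg_zero[OF alg] by simp
    qed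
  qed
  then show "id_delta n \<iota> (\<rho> a) (d1,(p,B)) = 0"
    by (cases d1) (simp add: id_delta_def)
qed

end

lemma cs: "(\<And>c. c * z = z * c) \<Longrightarrow> x * (z * y) = z * (x * (y::'a::ring_1))"
  by (metis mult.assoc)

lemma M1:
  fixes h a b :: "'a::ring_1"
  assumes hc: "\<And>c. c * h = h * c" and hh: "h + h = 1"
  shows "h * a * (h * b) + h * a * (h * b) = h * (a * b)"
proof -
  have e: "h * a * (h * b) = h * (h * (a * b))" by (simp add: mult.assoc cs[OF hc, of a b])
  show ?thesis unfolding e by (simp add: distrib_right[symmetric] hh)
qed

lemma M2:
  fixes h w a b :: "'a::ring_1"
  assumes hc: "\<And>c. c * h = h * c" and wc: "\<And>c. c * w = w * c" and hh: "h + h = 1"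
  shows "h * a * (- (w * b)) + - (w * a) * (h * b) = - (w * (a * b))"
    and "h * a * (- (w * b)) - - (w * a) * (h * b) = 0"
proof -
  have e1: "h * a * (- (w * b)) = - (h * (w * (a * b)))" by (simp add: mult.assoc cs[OF wc, of a b])
  have e2: "- (w * a) * (h * b) = - (h * (w * (a * b)))"
    by (simp add: mult.assoc cs[OF hc, of a b] cs[OF hc, of w "a * b"])
  show "h * a * (- (w * b)) + - (w * a) * (h * b) = - (w * (a * b))"
  proof -
    have hz: "h * (w * (a * b)) + h * (w * (a * b)) = w * (a * b)"
      by (simp add: distrib_right[symmetric] hh)
    have "- (h * (w * (a * b))) + - (h * (w * (a * b))) = - (h * (w * (a * b)) + h * (w * (a * b)))"
      by (simp add: minus_add_distrib)
    then show ?thesis unfolding e1 e2 hz .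
  qed
  show "h * a * (- (w * b)) - - (w * a) * (h * b) = 0"
    unfolding e1 e2 by simp
qed

lemma M4:
  fixes u v a b :: "'a::ring_1"
  assumes uc: "\<And>c. c * u = u * c" and vc: "\<And>c. c * v = v * c"
  shows "(- (u * a)) * (- (v * b)) = (- (v * a)) * (- (u * b))"
proof -
  have "(- (u * a)) * (- (v * b)) = u * (v * (a * b))" by (simp add: mult.assoc cs[OF vc, of a b])
  also have "\<dots> = v * (u * (a * b))" using cs[OF uc, of v "a * b"] by simp
  also have "\<dots> = (- (v * a)) * (- (u * b))" by (simp add: mult.assoc cs[OF uc, of a b])
  finally show ?thesis .
qed

lemma backward:
  fixes \<iota> :: "'k::field \<Rightarrow> 'a::ring_1" and \<rho> :: "'a \<Rightarrow> hidx \<Rightarrow> 'a" and n :: nat and w :: "nat \<Rightarrow> 'a"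
  assumes alg: "kalg \<iota>" and char: "(2::'k) \<noteq> 0"
    and cw: "\<forall>i\<in>{1..<n}. \<forall>c. w i * c = c * w i"
    and eq: "\<forall>a. \<rho> a = rhoF \<iota> n w a"
  shows "symmetric_partial_coaction n \<iota> \<rho>"
proof -
  define h where "h = \<iota> (1/2)"
  have hc: "\<And>c. c * h = h * c" using kalg_comm[OF alg] unfolding h_def by metis
  have hh: "h + h = 1" using kalg_half[OF alg char] unfolding h_def by simp
  have wc: "\<And>c. c * w i = w i * c" if "i \<in> {1..<n}" for i using cw that by metis
  have RFa: "form3 n (\<rho> a) (h * a) (h * a) (\<lambda>i. - (w i * a)) (\<lambda>_. 0)" for a
    using RF[OF alg eq, of a] unfolding h_def .
  have R1: "form3 n (\<rho> 1) h h (\<lambda>i. - w i) (\<lambda>_. 0)"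
    using RFa[of 1] by simp
  have R0: "\<rho> 0 = (\<lambda>_. 0)"
    by (rule form3_eq[OF RFa[of 0]]) (simp add: form3_zero)
  have cu: "\<forall>a. (\<Sum>b\<in>Idx n. \<iota> (heps b) * \<rho> a b) = a"
  proof
    fix a
    have "(\<Sum>b\<in>Idx n. \<iota> (heps b) * \<rho> a b) = \<iota> (heps (False,{})) * \<rho> a (False,{}) + \<iota> (heps (True,{})) * \<rho> a (True,{})"
    proof (rule sum_two)
      fix b assume b: "b \<in> Idx n" "b \<noteq> (False,{})" "b \<noteq> (True,{})"
      obtain p B where pB: "b = (p,B)" by fastforce
      have "B \<noteq> {}" using b pB by (cases p) auto
      then show "\<iota> (heps b) * \<rho> a b = 0" using pB by (simp add: heps_def kalg_zero[OF alg])
    qed (auto simp: Idx_def)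
    also have "\<dots> = h * a + h * a"
      using r0[OF alg eq] r1[OF alg eq] by (simp add: heps_def kalg_one[OF alg] h_def)
    also have "\<dots> = a" by (simp add: distrib_right[symmetric] hh)
    finally show "(\<Sum>b\<in>Idx n. \<iota> (heps b) * \<rho> a b) = a" .
  qed
  have mu: "\<forall>a b. \<rho> (a * b) = tmul n \<iota> (\<rho> a) (\<rho> b)"
  proof (intro allI)
    fix a b
    have sym: "\<forall>i\<in>{1..<n}. \<forall>j\<in>{1..<n}. (- (w i * a)) * (- (w j * b)) = (- (w j * a)) * (- (w i * b))"
      using M4 wc by blast
    have P: "form3 n (tmul n \<iota> (\<rho> a) (\<rho> b)) (h * (a * b)) (h * (a * b)) (\<lambda>i. - (w i * (a * b))) (\<lambda>_. 0)"
    proof (rule form3_cong[OF form3_mult[OF alg char RFa RFa sym]])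
      show "h * a * (h * b) + h * a * (h * b) = h * (a * b)" by (rule M1[OF hc hh])
      then show "h * a * (h * b) + h * a * (h * b) = h * (a * b)" .
      show "\<forall>i\<in>{1..<n}. h * a * - (w i * b) + - (w i * a) * (h * b) = - (w i * (a * b))"
        using M2(1)[OF hc wc hh] by blast
      show "\<forall>i\<in>{1..<n}. h * a * - (w i * b) - - (w i * a) * (h * b) = 0"
        using M2(2)[OF hc wc hh] by blast
    qed
    show "\<rho> (a * b) = tmul n \<iota> (\<rho> a) (\<rho> b)" by (rule form3_eq[OF RFa P])
  qed
  have key: "\<rho> (\<rho> a d) = tmul n \<iota> (\<rho> 1) (\<lambda>d1. id_delta n \<iota> (\<rho> a) (d1,d))
           \<and> \<rho> (\<rho> a d) = tmul n \<iota> (\<lambda>d1. id_delta n \<iota> (\<rho> a) (d1,d)) (\<rho> 1)"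
    if d: "d \<in> Idx n" for a d
  proof -
    obtain p B where dpB: "d = (p,B)" by fastforce
    have Br: "B \<subseteq> {1..<n}" using d dpB by (auto simp: Idx_def)
    let ?X = "\<lambda>d1. id_delta n \<iota> (\<rho> a) (d1,d)"
    show ?thesis
    proof (cases "B = {}")
      case True
      show ?thesis
      proof (cases p)
        case False
        have X: "form3 n ?X (h * a) 0 (\<lambda>_. 0) (\<lambda>_. 0)" using XF0[OF alg eq, of a] dpB True False h_def by simp
        have x: "\<rho> a d = h * a" using r0[OF alg eq, of a] dpB True False h_def by simp
        have L: "form3 n (tmul n \<iota> (\<rho> 1) ?X) (h * (h * a)) (h * (h * a)) (\<lambda>i. - (w i * (h * a))) (\<lambda>_. 0)"
          by (rule form3_cong[OF form3_mult[OF alg char R1 X]]) auto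
        have Rr: "form3 n (tmul n \<iota> ?X (\<rho> 1)) (h * (h * a)) (h * (h * a)) (\<lambda>i. - (w i * (h * a))) (\<lambda>_. 0)"
          by (rule form3_cong[OF form3_mult[OF alg char X R1]]) (auto simp: mult.assoc hc[of a] wc cs[OF hc, of "w _" a])
        show ?thesis unfolding x using form3_eq[OF RFa L] form3_eq[OF RFa Rr] by blast
      next
        case TT: True
        have X: "form3 n ?X 0 (h * a) (\<lambda>i. - (w i * a)) (\<lambda>_. 0)" using XT0[OF alg eq, of a] dpB True TT h_def by simp
        have x: "\<rho> a d = h * a" using r1[OF alg eq, of a] dpB True TT h_def by simp
        have symL: "\<forall>i\<in>{1..<n}. \<forall>j\<in>{1..<n}. (- w i) * (- (w j * a)) = (- w j) * (- (w i * a))"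
          using M4[OF wc wc, of _ _ 1 a] by simp
        have symR: "\<forall>i\<in>{1..<n}. \<forall>j\<in>{1..<n}. (- (w i * a)) * (- w j) = (- (w j * a)) * (- w i)"
          using M4[OF wc wc, of _ _ a 1] by simp
        have c1: "w i * (h * a) = h * (w i * a)" for i using cs[OF hc, of "w i" a] .
        have L: "form3 n (tmul n \<iota> (\<rho> 1) ?X) (h * (h * a)) (h * (h * a)) (\<lambda>i. - (w i * (h * a))) (\<lambda>_. 0)"
          by (rule form3_cong[OF form3_mult[OF alg char R1 X symL]]) (auto simp: c1)
        have Rr: "form3 n (tmul n \<iota> ?X (\<rho> 1)) (h * (h * a)) (h * (h * a)) (\<lambda>i. - (w i * (h * a))) (\<lambda>_. 0)"
          by (rule form3_cong[OF form3_mult[OF alg char X R1 symR]]) (auto simp: mult.assoc hc[of a] wc c1)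
        show ?thesis unfolding x using form3_eq[OF RFa L] form3_eq[OF RFa Rr] by blast
      qed
    next
      case False
      show ?thesis
      proof (cases "\<exists>j\<in>{1..<n}. B = {j}")
        case True
        then obtain j where j: "j \<in> {1..<n}" "B = {j}" by blast
        show ?thesis
        proof (cases p)
          case FF: False
          have X: "form3 n ?X 0 0 (\<lambda>_. 0) (\<lambda>_. 0)" using XFj[OF alg eq j(1), of a] dpB j FF by simp
          have x: "\<rho> a d = 0" using rF[OF alg eq j(1), of a] dpB j FF by simp
          have L: "form3 n (tmul n \<iota> (\<rho> 1) ?X) (h * 0) (h * 0) (\<lambda>i. - (w i * 0)) (\<lambda>_. 0)"
            by (rule form3_cong[OF form3_mult[OF alg char R1 X]]) auto
          have Rr: "form3 n (tmul n \<iota> ?X (\<rho> 1)) (h * 0) (h * 0) (\<lambda>i. - (w i * 0)) (\<lambda>_. 0)"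
            by (rule form3_cong[OF form3_mult[OF alg char X R1]]) auto
          show ?thesis unfolding x using form3_eq[OF RFa L] form3_eq[OF RFa Rr] by blast
        next
          case TT: True
          have X: "form3 n ?X (- (w j * a)) 0 (\<lambda>_. 0) (\<lambda>_. 0)" using XTj[OF alg eq j(1), of a] dpB j TT by simp
          have x: "\<rho> a d = - (w j * a)" using rT[OF alg eq j(1), of a] dpB j TT by simp
          have c2: "w j * (h * a) = h * (w j * a)" using cs[OF hc, of "w j" a] .
          have c3: "w j * (w i * a) = w i * (w j * a)" if "i \<in> {1..<n}" for i using cs[OF wc[OF that], of "w j" a] .
          have L: "form3 n (tmul n \<iota> (\<rho> 1) ?X) (h * (- (w j * a))) (h * (- (w j * a))) (\<lambda>i. - (w i * (- (w j * a)))) (\<lambda>_. 0)"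
            by (rule form3_cong[OF form3_mult[OF alg char R1 X]]) auto
          have Rr: "form3 n (tmul n \<iota> ?X (\<rho> 1)) (h * (- (w j * a))) (h * (- (w j * a))) (\<lambda>i. - (w i * (- (w j * a)))) (\<lambda>_. 0)"
            by (rule form3_cong[OF form3_mult[OF alg char X R1]]) (auto simp: mult.assoc hc[of a] c2 wc c3)
          show ?thesis unfolding x using form3_eq[OF RFa L] form3_eq[OF RFa Rr] by blast
        qed
      next
        case nS: False
        have B2: "\<forall>i\<in>{1..<n}. B \<noteq> {i}" using nS by blast
        have X0: "?X = (\<lambda>_. 0)" using Xother[OF alg eq False B2, of a p] dpB by simp
        have X: "form3 n ?X 0 0 (\<lambda>_. 0) (\<lambda>_. 0)" unfolding X0 by (rule form3_zero)
        have x: "\<rho> a d = 0" using RFz[OF alg eq False B2, of a p] dpB by simp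
        have L: "form3 n (tmul n \<iota> (\<rho> 1) ?X) (h * 0) (h * 0) (\<lambda>i. - (w i * 0)) (\<lambda>_. 0)"
          by (rule form3_cong[OF form3_mult[OF alg char R1 X]]) auto
        have Rr: "form3 n (tmul n \<iota> ?X (\<rho> 1)) (h * 0) (h * 0) (\<lambda>i. - (w i * 0)) (\<lambda>_. 0)"
          by (rule form3_cong[OF form3_mult[OF alg char X R1]]) auto
        show ?thesis unfolding x using form3_eq[OF RFa L] form3_eq[OF RFa Rr] by blast
      qed
    qed
  qed
  have co: "\<forall>a. rho_rho n \<rho> a = ttmul n \<iota> (tens_one (\<rho> 1)) (id_delta n \<iota> (\<rho> a))"
  proof (intro allI ext)
    fix a and cd :: "hidx \<times> hidx"
    obtain c d where cd: "cd = (c,d)" by (rule prod.exhaust)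
    show "rho_rho n \<rho> a cd = ttmul n \<iota> (tens_one (\<rho> 1)) (id_delta n \<iota> (\<rho> a)) cd"
    proof (cases "d \<in> Idx n")
      case True
      then show ?thesis using key[OF True, of a, THEN conjunct1] ttmul_left[OF alg True] cd by (simp add: rho_rho_def)
    next
      case False
      then show ?thesis using ttmul_out[OF alg False] cd by (simp add: rho_rho_def)
    qed
  qed
  have cs2: "\<forall>a. rho_rho n \<rho> a = ttmul n \<iota> (id_delta n \<iota> (\<rho> a)) (tens_one (\<rho> 1))"
  proof (intro allI ext)
    fix a and cd :: "hidx \<times> hidx"
    obtain c d where cd: "cd = (c,d)" by (rule prod.exhaust)
    show "rho_rho n \<rho> a cd = ttmul n \<iota> (id_delta n \<iota> (\<rho> a)) (tens_one (\<rho> 1)) cd"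
    proof (cases "d \<in> Idx n")
      case True
      then show ?thesis using key[OF True, of a, THEN conjunct2] ttmul_right[OF alg True] cd by (simp add: rho_rho_def)
    next
      case False
      then show ?thesis using ttmul_out[OF alg False] cd by (simp add: rho_rho_def)
    qed
  qed
  show ?thesis unfolding symmetric_partial_coaction_def partial_coaction_def
    using cu mu co cs2 by blast
qed

lemma forward:
  fixes \<iota> :: "'k::field \<Rightarrow> 'a::ring_1" and \<rho> :: "'a \<Rightarrow> hidx \<Rightarrow> 'a" and n :: nat
  assumes char: "(2::'k) \<noteq> 0"
    and alg: "kalg \<iota>"
    and lin: "klinear \<iota> \<rho>"
    and supp: "\<forall>a b. b \<notin> Idx n \<longrightarrow> \<rho> a b = 0"
    and A1: "\<rho> 1 (False, {}) - \<rho> 1 (True, {}) = 0"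
    and central: "\<forall>i\<in>{1..<n}. \<forall>c. wcoef \<rho> i * c = c * wcoef \<rho> i"
    and pc: "partial_coaction n \<iota> \<rho>"
  shows "\<forall>a. \<rho> a = rhoF \<iota> n (wcoef \<rho>) a"
proof -
  define h where "h = \<iota> (1/2)"
  define w where "w = wcoef \<rho>"
  have hc: "\<And>c. c * h = h * c" using kalg_comm[OF alg] unfolding h_def by metis
  have hh: "h + h = 1" using kalg_half[OF alg char] unfolding h_def by simp
  have wc: "\<And>c. c * w i = w i * c" if "i \<in> {1..<n}" for i using central that unfolding w_def by metis
  have o: "\<iota> 1 = 1" using kalg_one[OF alg] .
  have z: "\<iota> 0 = 0" using kalg_zero[OF alg] .
  have ng: "\<iota> (-1) = -1" using kalg_neg[OF alg, of 1] o by simp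
  have halfx: "x = h * x + h * x" for x :: 'a
    by (simp add: distrib_right[symmetric] hh)
  have cu0: "\<forall>a. (\<Sum>b\<in>Idx n. \<iota> (heps b) * \<rho> a b) = a"
    and mu: "\<forall>a b. \<rho> (a * b) = tmul n \<iota> (\<rho> a) (\<rho> b)"
    and co0: "\<forall>a. rho_rho n \<rho> a = ttmul n \<iota> (tens_one (\<rho> 1)) (id_delta n \<iota> (\<rho> a))"
    using pc unfolding partial_coaction_def by blast+
  have cu: "\<rho> a (False,{}) + \<rho> a (True,{}) = a" for a
  proof -
    have "(\<Sum>b\<in>Idx n. \<iota> (heps b) * \<rho> a b) = \<iota> (heps (False,{})) * \<rho> a (False,{}) + \<iota> (heps (True,{})) * \<rho> a (True,{})"
    proof (rule sum_two)
      fix b assume b: "b \<in> Idx n" "b \<noteq> (False,{})" "b \<noteq> (True,{})"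
      obtain p B where pB: "b = (p,B)" by fastforce
      have "B \<noteq> {}" using b pB by (cases p) auto
      then show "\<iota> (heps b) * \<rho> a b = 0" using pB by (simp add: heps_def z)
    qed (auto simp: Idx_def)
    then show ?thesis using cu0 by (simp add: heps_def o)
  qed
  have co: "\<rho> (\<rho> a d) = tmul n \<iota> (\<rho> 1) (\<lambda>d1. id_delta n \<iota> (\<rho> a) (d1,d))" if d: "d \<in> Idx n" for a d
  proof
    fix c
    have "\<rho> (\<rho> a d) c = rho_rho n \<rho> a (c,d)" using d by (simp add: rho_rho_def)
    also have "\<dots> = ttmul n \<iota> (tens_one (\<rho> 1)) (id_delta n \<iota> (\<rho> a)) (c,d)" using co0 by simp
    also have "\<dots> = tmul n \<iota> (\<rho> 1) (\<lambda>d1. id_delta n \<iota> (\<rho> a) (d1,d)) c" by (rule ttmul_left[OF alg d])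
    finally show "\<rho> (\<rho> a d) c = tmul n \<iota> (\<rho> 1) (\<lambda>d1. id_delta n \<iota> (\<rho> a) (d1,d)) c" .
  qed
  have lin0: "\<rho> 0 = (\<lambda>_. 0)"
  proof
    fix e
    have "\<rho> (0 + 0) = (\<lambda>e. \<rho> 0 e + \<rho> 0 e)" using lin unfolding klinear_def by blast
    then have "\<rho> 0 e = \<rho> 0 e + \<rho> 0 e" by (metis add_0)
    then show "\<rho> 0 e = 0" by simp
  qed
  have linh: "\<rho> (\<iota> c * a) = (\<lambda>e. \<iota> c * \<rho> a e)" for c a
    using lin unfolding klinear_def by blast
  have FI: "(p,{}) \<in> Idx n" for p by (simp add: Idx_def)
  have SI: "i \<in> {1..<n} \<Longrightarrow> (p,{i}) \<in> Idx n" for p i by (simp add: Idx_def)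
  have EF: "\<rho> 1 (False,{}) = h" and ET: "\<rho> 1 (True,{}) = h"
  proof -
    have e: "\<rho> 1 (True,{}) = \<rho> 1 (False,{})" using A1 by simp
    have "\<rho> 1 (False,{}) + \<rho> 1 (False,{}) = 1" using cu[of 1] e by simp
    then have "h * (\<rho> 1 (False,{}) + \<rho> 1 (False,{})) = h" by simp
    then show "\<rho> 1 (False,{}) = h" using halfx[of "\<rho> 1 (False,{})"] by (simp add: distrib_left)
    then show "\<rho> 1 (True,{}) = h" using e by simp
  qed
  have D: "\<rho> a (False,{}) = h * a \<and> \<rho> a (True,{}) = h * a" for a
  proof -
    have m: "\<rho> a = tmul n \<iota> (\<rho> 1) (\<rho> a)" using mu[rule_format, of 1 a] by simp
    have "\<rho> a (False,{}) = h * \<rho> a (False,{}) + h * \<rho> a (True,{})"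
      by (subst m) (simp add: tmul_at[OF alg] UNIV_bool bmul_left_one bmul_left_g o EF ET)
    also have "\<dots> = h * a" using cu[of a] by (simp add: distrib_left[symmetric])
    finally have 1: "\<rho> a (False,{}) = h * a" .
    have "\<rho> a (True,{}) = h * \<rho> a (True,{}) + h * \<rho> a (False,{})"
      by (subst m) (simp add: tmul_at[OF alg] UNIV_bool bmul_left_one bmul_left_g o EF ET)
    also have "\<dots> = h * a" using cu[of a] by (simp add: distrib_left[symmetric] add.commute)
    finally show ?thesis using 1 by simp
  qed
  have EFi: "\<rho> 1 (False,{i}) = 0" if i: "i \<in> {1..<n}" for i
  proof -
    have "\<rho> (\<rho> 1 (False,{})) = (\<lambda>e. h * \<rho> 1 e)" using linh[of "1/2" 1] EF h_def by simp
    then have "h * \<rho> 1 (False,{i}) = tmul n \<iota> (\<rho> 1) (\<lambda>d1. id_delta n \<iota> (\<rho> 1) (d1,(False,{}))) (False,{i})"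
      using co[OF FI, of 1 False] by metis
    also have "\<dots> = h * \<rho> 1 (False,{i}) + \<rho> 1 (False,{i}) * h"
      using i by (simp add: tmul_at[OF alg] Pow_sing UNIV_bool bmul_left_one bmul_left_g bmul_right_one bmul_right_g
          o z id_delta_group[OF alg] FI SI EF ET)
    finally have "\<rho> 1 (False,{i}) * h = 0" by simp
    then show ?thesis using halfx[of "\<rho> 1 (False,{i})"] hc by simp
  qed
  have ETi: "\<rho> 1 (True,{i}) = - w i" if i: "i \<in> {1..<n}" for i
    using EFi[OF i] unfolding w_def wcoef_def by simp
  have E: "\<rho> a (False,{i}) = 0 \<and> \<rho> a (True,{i}) = - (w i * a)" if i: "i \<in> {1..<n}" for a i
  proof -
    define x where "x = \<rho> a (False,{i})"
    define y where "y = \<rho> a (True,{i})"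
    have m1: "\<rho> a = tmul n \<iota> (\<rho> 1) (\<rho> a)" using mu[rule_format, of 1 a] by simp
    have m2: "\<rho> a = tmul n \<iota> (\<rho> a) (\<rho> 1)" using mu[rule_format, of a 1] by simp
    have L: "x = h * x + h * y + w i * (h * a)"
      unfolding x_def y_def
      apply (subst m1) apply (subst tmul_at[OF alg]) using i apply simp
     apply (simp add: Pow_sing UNIV_bool bmul_left_one bmul_left_g bmul_right_one bmul_right_g
          o z ng EF ET EFi[OF i] ETi[OF i] D i) done
    have R: "x = h * a * (- w i) + x * h - y * h"
      unfolding x_def y_def
      apply (subst m2) apply (subst tmul_at[OF alg]) using i apply simp
     apply (simp add: Pow_sing UNIV_bool bmul_left_one bmul_left_g bmul_right_one bmul_right_g
          o z ng EF ET EFi[OF i] ETi[OF i] D i) done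
    have L': "x = h * x + h * y + h * (w i * a)" using L cs[OF hc, of "w i" a] by simp
    have R': "x = - (h * (w i * a)) + h * x - h * y" using R hc[of x] hc[of y] wc[OF i, of a] by (simp add: mult.assoc)
    have "x + x = h * x + h * x"
    proof -
      have "x + x = (h * x + h * y + h * (w i * a)) + (- (h * (w i * a)) + h * x - h * y)"
        using L' R' by simp
      also have "\<dots> = h * x + h * x" by (simp add: algebra_simps)
      finally show ?thesis .
    qed
    then have "x + x = x" using halfx[of x] by simp
    then have x0: "x = 0" by simp
    have "h * y = - (h * (w i * a))" using L' x0 by (simp add: eq_neg_iff_add_eq_0)
    then have "y = - (h * (w i * a)) + - (h * (w i * a))" using halfx[of y] by simp
    also have "\<dots> = - (h * (w i * a) + h * (w i * a))" by (simp add: minus_add_distrib)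
    also have "\<dots> = - (w i * a)" using halfx[of "w i * a"] by simp
    finally show ?thesis using x0 unfolding x_def y_def by simp
  qed
  have pm: "(-1::'a) ^ m * ((-1) ^ m * y) = y" for m y
    by (simp add: mult.assoc[symmetric] power_add[symmetric])
  have cancel: "y = 0" if "h * (\<iota> ((-1) ^ m) * y) = 0" for m y
  proof -
    have "(-1) ^ m * y = (0::'a)" using that halfx[of "(-1) ^ m * y"] by (simp add: kalg_pm1[OF alg])
    then show ?thesis using pm[of m y] by simp
  qed
  have Sr: "S \<subseteq> {1..<n} \<Longrightarrow> (p,S) \<in> Idx n" for p S by (simp add: Idx_def)
  have Fk: "\<forall>B a. B \<subseteq> {1..<n} \<longrightarrow> card B = k \<longrightarrow> 1 \<le> k \<longrightarrow> \<rho> a (False,B) = 0" for k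
  proof (induction k rule: less_induct)
    case (less k)
    show ?case
    proof (intro allI impI)
      fix B a assume Br: "B \<subseteq> {1..<n}" and cB: "card B = k" and k1: "1 \<le> k"
      have finB: "finite B" using Br finite_subset by blast
      show "\<rho> a (False,B) = 0"
      proof (cases "k = 1")
        case True
        then obtain j where j: "B = {j}" using cB card_1_singletonE by blast
        then have "j \<in> {1..<n}" using Br by auto
        then show ?thesis using E j by blast
      next
        case False
        then have k2: "2 \<le> k" using k1 by simp
        then have "B \<noteq> {}" using cB by auto
        then obtain j where jB: "j \<in> B" by blast
        define S0 where "S0 = B - {j}"
        have jr: "j \<in> {1..<n}" using jB Br by auto
        have S0r: "S0 \<subseteq> {1..<n}" using Br unfolding S0_def by auto
        have cS0: "card S0 = k - 1" using cB jB finB unfolding S0_def by simp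
        have BS0: "insert j S0 = B" using jB unfolding S0_def by auto
        have jS0: "j \<notin> S0" unfolding S0_def by simp
        have finS0: "finite S0" using finB unfolding S0_def by simp
        define Y where "Y = (\<lambda>d1. id_delta n \<iota> (\<rho> a) (d1,(False,{j})))"
        have Yv: "Y (r,S) = (if r = True \<and> j \<notin> S \<and> S \<subseteq> {1..<n} then \<iota> ((-1) ^ card {k\<in>S. k < j}) * \<rho> a (False, insert j S) else 0)" for r S
          unfolding Y_def using id_delta_single[OF alg jr, of "\<rho> a" r S False] by simp
        have "\<rho> (\<rho> a (False,{j})) = tmul n \<iota> (\<rho> 1) Y" using co[OF SI[OF jr], of a False] unfolding Y_def .
        then have "tmul n \<iota> (\<rho> 1) Y = (\<lambda>_. 0)" using E[OF jr, of a] lin0 by simp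
        then have "0 = tmul n \<iota> (\<rho> 1) Y (True,S0)" by simp
        also have "\<dots> = (\<Sum>R\<in>Pow S0. \<Sum>q\<in>UNIV. \<iota> (bmul (q,R) (q \<noteq> True, S0 - R) (True,S0)) * \<rho> 1 (q,R) * Y (q \<noteq> True, S0 - R))"
          by (rule tmul_at[OF alg S0r])
        finally have z0: "sum G (Pow S0) = 0" if "G = (\<lambda>R. \<Sum>q\<in>UNIV. \<iota> (bmul (q,R) (q \<noteq> True, S0 - R) (True,S0)) * \<rho> 1 (q,R) * Y (q \<noteq> True, S0 - R))" for G
          using that by simp
        define G where "G = (\<lambda>R. \<Sum>q\<in>UNIV. \<iota> (bmul (q,R) (q \<noteq> True, S0 - R) (True,S0)) * \<rho> 1 (q,R) * Y (q \<noteq> True, S0 - R))"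
        have "sum G (Pow S0) = G {} + sum G (Pow S0 - {{}})"
          by (rule sum.remove) (use finS0 in auto)
        moreover have "sum G (Pow S0 - {{}}) = 0"
        proof (rule sum.neutral, rule ballI)
          fix R assume R: "R \<in> Pow S0 - {{}}"
          have RS: "R \<subseteq> S0" "R \<noteq> {}" using R by auto
          have c1: "card (S0 - R) < card S0"
            by (rule psubset_card_mono) (use RS finS0 in auto)
          have "\<rho> a (False, insert j (S0 - R)) = 0"
          proof -
            have "j \<notin> S0 - R" using jS0 by simp
            then have ci: "card (insert j (S0 - R)) = card (S0 - R) + 1" using finS0 by simp
            have "card (insert j (S0 - R)) < k" using ci c1 cS0 k2 by simp
            moreover have "insert j (S0 - R) \<subseteq> {1..<n}" using jr S0r by auto
            ultimately show ?thesis using less.IH[of "card (insert j (S0 - R))"] ci by simp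
          qed
          then show "G R = 0" by (simp add: G_def UNIV_bool Yv)
        qed
        moreover have "G {} = h * (\<iota> ((-1) ^ card {k\<in>S0. k < j}) * \<rho> a (False, B))"
          using S0r jS0 by (simp add: G_def UNIV_bool Yv bmul_left_one o EF BS0)
        ultimately have "h * (\<iota> ((-1) ^ card {k\<in>S0. k < j}) * \<rho> a (False, B)) = 0"
          using z0[OF G_def] by simp
        then show ?thesis by (rule cancel)
      qed
    qed
  qed
  have zF: "\<rho> a (False,S) = 0" if "S \<subseteq> {1..<n}" "S \<noteq> {}" for a S
  proof -
    have "finite S" using that(1) finite_subset by blast
    then have "1 \<le> card S" using that(2) by (simp add: Suc_le_eq card_gt_0_iff)
    then show ?thesis using Fk[of "card S"] that(1) by blast
  qed
  have G: "\<rho> a (True,B) = 0" if Br: "B \<subseteq> {1..<n}" and cB: "2 \<le> card B" for a B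
  proof -
    have finB: "finite B" using Br finite_subset by blast
    have "B \<noteq> {}" using cB by auto
    then obtain j where jB: "j \<in> B" by blast
    define S0 where "S0 = B - {j}"
    have jr: "j \<in> {1..<n}" using jB Br by auto
    have S0r: "S0 \<subseteq> {1..<n}" using Br unfolding S0_def by auto
    have cS0: "card S0 = card B - 1" using jB finB unfolding S0_def by simp
    then have S0ne: "S0 \<noteq> {}" using cB by auto
    have BS0: "insert j S0 = B" using jB unfolding S0_def by auto
    have jS0: "j \<notin> S0" unfolding S0_def by simp
    have finS0: "finite S0" using finB unfolding S0_def by simp
    define Y where "Y = (\<lambda>d1. id_delta n \<iota> (\<rho> a) (d1,(True,{j})))"
    have Yv: "Y (r,S) = (if r = False \<and> j \<notin> S \<and> S \<subseteq> {1..<n} then \<iota> ((-1) ^ card {k\<in>S. k < j}) * \<rho> a (True, insert j S) else 0)" for r S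
      unfolding Y_def using id_delta_single[OF alg jr, of "\<rho> a" r S True] by simp
    have "\<rho> (\<rho> a (True,{j})) = tmul n \<iota> (\<rho> 1) Y" using co[OF SI[OF jr], of a True] unfolding Y_def .
    then have "0 = tmul n \<iota> (\<rho> 1) Y (False,S0)" using zF[OF S0r S0ne] by metis
    also have "\<dots> = (\<Sum>R\<in>Pow S0. \<Sum>q\<in>UNIV. \<iota> (bmul (q,R) (q \<noteq> False, S0 - R) (False,S0)) * \<rho> 1 (q,R) * Y (q \<noteq> False, S0 - R))"
      by (rule tmul_at[OF alg S0r])
    finally have z0: "sum GG (Pow S0) = 0" if "GG = (\<lambda>R. \<Sum>q\<in>UNIV. \<iota> (bmul (q,R) (q \<noteq> False, S0 - R) (False,S0)) * \<rho> 1 (q,R) * Y (q \<noteq> False, S0 - R))" for GG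
      using that by simp
    define GG where "GG = (\<lambda>R. \<Sum>q\<in>UNIV. \<iota> (bmul (q,R) (q \<noteq> False, S0 - R) (False,S0)) * \<rho> 1 (q,R) * Y (q \<noteq> False, S0 - R))"
    have "sum GG (Pow S0) = GG {} + sum GG (Pow S0 - {{}})"
      by (rule sum.remove) (use finS0 in auto)
    moreover have "sum GG (Pow S0 - {{}}) = 0"
    proof (rule sum.neutral, rule ballI)
      fix R assume R: "R \<in> Pow S0 - {{}}"
      have "R \<subseteq> {1..<n}" "R \<noteq> {}" using R S0r by auto
      then have "\<rho> 1 (False,R) = 0" by (rule zF)
      then show "GG R = 0" by (simp add: GG_def UNIV_bool Yv)
    qed
    moreover have "GG {} = h * (\<iota> ((-1) ^ card {k\<in>S0. k < j}) * \<rho> a (True, B))"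
      using S0r jS0 by (simp add: GG_def UNIV_bool Yv bmul_left_one o EF BS0)
    ultimately have "h * (\<iota> ((-1) ^ card {k\<in>S0. k < j}) * \<rho> a (True, B)) = 0"
      using z0[OF GG_def] by simp
    then show ?thesis by (rule cancel)
  qed
  show ?thesis
  proof
    fix a
    have "form3 n (\<rho> a) (h * a) (h * a) (\<lambda>i. - (w i * a)) (\<lambda>_. 0)"
      unfolding form3_def
    proof (intro conjI ballI allI impI)
      show "\<rho> a (False,{}) = h * a" "\<rho> a (True,{}) = h * a" using D by auto
      fix i assume i: "i \<in> {1..<n}"
      show "\<rho> a (True,{i}) = - (w i * a)" "\<rho> a (False,{i}) = 0" using E[OF i] by auto
    next
      fix p B assume B: "B \<noteq> {} \<and> (\<forall>i\<in>{1..<n}. B \<noteq> {i})"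
      show "\<rho> a (p,B) = 0"
      proof (cases "B \<subseteq> {1..<n}")
        case False
        then have "(p,B) \<notin> Idx n" by (simp add: Idx_def)
        then show ?thesis using supp by blast
      next
        case True
        have finB: "finite B" using True finite_subset by blast
        have "card B \<noteq> 0" using finB B by simp
        moreover have "card B \<noteq> 1"
        proof
          assume "card B = 1"
          then obtain j where "B = {j}" using card_1_singletonE by blast
          then show False using B True by auto
        qed
        ultimately have c2: "2 \<le> card B" by linarith
        show ?thesis
        proof (cases p)
          case True
          then show ?thesis using G[OF \<open>B \<subseteq> {1..<n}\<close> c2] by simp
        next
          case False
          then show ?thesis using zF[OF \<open>B \<subseteq> {1..<n}\<close>] B by simp
        qed
      qed
    qed
    then show "\<rho> a = rhoF \<iota> n (wcoef \<rho>) a"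
      using form3_eq rhoF_form unfolding h_def w_def by metis
  qed
qed

theorem theorem4p9:
  fixes \<iota> :: "'k::field \<Rightarrow> 'a::ring_1" and \<rho> :: "'a \<Rightarrow> hidx \<Rightarrow> 'a" and n :: nat
  assumes char: "(2::'k) \<noteq> 0"
    and n2: "n \<ge> 2"
    and alg: "kalg \<iota>"
    and lin: "klinear \<iota> \<rho>"
    and supp: "\<forall>a b. b \<notin> Idx n \<longrightarrow> \<rho> a b = 0"
    and A1: "\<rho> 1 (False, {}) - \<rho> 1 (True, {}) = 0"
    and central: "\<forall>i\<in>{1..<n}. \<forall>c. wcoef \<rho> i * c = c * wcoef \<rho> i"
  shows "(partial_coaction n \<iota> \<rho> \<longleftrightarrow>
           (\<forall>a. \<rho> a = (\<lambda>e. tens (\<iota> (1/2) * a) (False, {}) e + tens (\<iota> (1/2) * a) (True, {}) e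
                         - (\<Sum>i\<in>{1..<n}. tens (wcoef \<rho> i * a) (True, {i}) e))))
       \<and> (partial_coaction n \<iota> \<rho> \<longrightarrow> symmetric_partial_coaction n \<iota> \<rho>)"
proof -
  have eqv: "(\<forall>a. \<rho> a = (\<lambda>e. tens (\<iota> (1/2) * a) (False, {}) e + tens (\<iota> (1/2) * a) (True, {}) e
                         - (\<Sum>i\<in>{1..<n}. tens (wcoef \<rho> i * a) (True, {i}) e)))
     \<longleftrightarrow> (\<forall>a. \<rho> a = rhoF \<iota> n (wcoef \<rho>) a)"
    unfolding rhoF_def ..
  have f: "partial_coaction n \<iota> \<rho> \<Longrightarrow> \<forall>a. \<rho> a = rhoF \<iota> n (wcoef \<rho>) a"
    by (rule forward[OF char alg lin supp A1 central])
  have b: "\<forall>a. \<rho> a = rhoF \<iota> n (wcoef \<rho>) a \<Longrightarrow> symmetric_partial_coaction n \<iota> \<rho>"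
    by (rule backward[OF alg char central])
  have s: "symmetric_partial_coaction n \<iota> \<rho> \<Longrightarrow> partial_coaction n \<iota> \<rho>"
    unfolding symmetric_partial_coaction_def by blast
  show ?thesis unfolding eqv using f b s by blast
qed

end
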